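(* Let $F$ be a $4$-regular graph, let $D$ be a directed version of $F$, let $\mathbf o$ be a transitional orientation of $F$, let $P$ be a circuit partition of $F$, let $E\subseteq E(F)$ be such that each circuit of $P$ traverses at most one edge of $E$, and let $\Gamma$ be a cycle spanning set of $F-E$. Then the matrix $\mathrm{CM}(F,\Gamma,D)\cdot\Delta_{D,\mathbf o}|_{\tau(P)}$ (with columns indexed by $\tau(P)=E(\mathrm{Tch}(P))$) represents the cographic matroid $M^*(\mathrm{Tch}(P))$.
   Context: Graphs: $G=(V,H,E,\epsilon)$ with finite sets of vertices $V$ and half-edges $H$, a partition $E$ of $H$ into unordered pairs (edges), and $\epsilon:H\to V$; loops and multiple edges allowed. $G-E'$ deletes the edges of $E'$. A directed version orders each edge as (tail, head). A single transition is an unordered pair of distinct half-edges incident with a common vertex; a directed single transition is such an ordered pair. A closed walk is a sequence $((h_1,h_2),\dots,(h_{n-1},h_n))$ of directed single transitions with $\{h_2,h_3\},\{h_4,h_5\},\dots,\{h_n,h_1\}$ edges, up to cyclic shift. For a directed version $D$ and closed walk $W$, $\sigma(D,W)\in\mathbb Z^{E}$ counts, at each edge $e$, traversals along its direction minus traversals against it. A circuit is a nonempty closed walk using each half-edge at most once, with orientation forgotten. The cycle space of $D$ is the right null space over $\mathbb Q$ of its vertex-edge incidence matrix. A cycle basis of $G$ is a set $B$ of closed walks such that the vectors $\sigma(D,W)$, $W\in B$, are pairwise distinct and form a basis of the cycle space; a cycle spanning set is a set of closed walks containing a cycle basis. For a set $\Gamma$ of closed walks, $\mathrm{CM}(G,\Gamma,D)$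 is the $\Gamma\times E(G)$ matrix with row $\sigma(D,W)$ for $W\in\Gamma$. $M^*(G)$ is the dual of the cycle matroid of $G$ on $E(G)$; a matrix represents it if its column matroid equals it. $F$ is $4$-regular if every vertex is incident with exactly $4$ half-edges. A transition at $v$ is a partition of the four half-edges at $v$ into two single transitions; $\mathfrak T(F)$ is the set of transitions. A circuit partition $P$ is a set of circuits of $F$ such that every half-edge lies in exactly one single transition of exactly one circuit of $P$; $\tau(P)$ is the set of transitions both of whose single transitions occur in circuits of $P$. The touch-graph $\mathrm{Tch}(P)$ has vertex set $P$, half-edge set the set of single transitions occurring in circuits of $P$, edge set $\tau(P)$, and maps each single transition to the circuit containing it. A transitional orientation $\mathbf o$ assigns to each transition $t$ one of its two single transitions $\mathbf o(t)$. The edge-transition incidence matrix $\Delta_{D,\mathbf o}$ is the $E(F)\times\mathfrak T(F)$ matrix over $\mathbb Q$ whose $(e,t)$ entry is $1$ if $e\cap\mathbf o(t)=\{h\}$ with $h$ the tail of $e$ in $D$, $-1$ if $e\cap\mathbf o(t)=\{h\}$ with $h$ the head of $e$, and $0$ otherwise; $A|_Y$ is the restriction to columns in $Y$. *)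

theory Defs
  imports Complex_Main
begin

record ('v,'h) hgraph =
  verts :: "'v set"
  halfs :: "'h set"
  edges :: "'h set set"
  inc   :: "'h \<Rightarrow> 'v"

definition is_graph :: "('v,'h) hgraph \<Rightarrow> bool" where
  "is_graph G \<longleftrightarrow> finite (verts G) \<and> finite (halfs G) \<and>
     (\<forall>e\<in>edges G. \<exists>a b. a \<noteq> b \<and> e = {a, b}) \<and>
     \<Union>(edges G) = halfs G \<and>
     (\<forall>e\<in>edges G. \<forall>e'\<in>edges G. e \<noteq> e' \<longrightarrow> e \<inter> e' = {}) \<and>
     inc G ` halfs G \<subseteq> verts G"

definition del_edges :: "('v,'h) hgraph \<Rightarrow> 'h set set \<Rightarrow> ('v,'h) hgraph" where
  "del_edges G X = G\<lparr>halfs := halfs G - \<Union>X, edges := edges G - X\<rparr>"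

definition directed_version :: "('v,'h) hgraph \<Rightarrow> ('h set \<Rightarrow> 'h) \<Rightarrow> bool" where
  "directed_version G tail \<longleftrightarrow> (\<forall>e\<in>edges G. tail e \<in> e)"

definition head :: "('h set \<Rightarrow> 'h) \<Rightarrow> 'h set \<Rightarrow> 'h" where
  "head tail e = (THE h. h \<in> e \<and> h \<noteq> tail e)"

definition dir_single_trans :: "('v,'h) hgraph \<Rightarrow> 'h \<times> 'h \<Rightarrow> bool" where
  "dir_single_trans G p \<longleftrightarrow> fst p \<in> halfs G \<and> snd p \<in> halfs G \<and> fst p \<noteq> snd p \<and>
     inc G (fst p) = inc G (snd p)"

definition single_trans :: "('v,'h) hgraph \<Rightarrow> 'h set \<Rightarrow> bool" where
  "single_trans G s \<longleftrightarrow> (\<exists>a b. s = {a, b} \<and> dir_single_trans G (a, b))"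

text \<open>A closed walk ((h1,h2),...,(h_{n-1},h_n)) is represented by a list of directed single
  transitions, consecutive ones (cyclically) joined by edges {h_2,h_3},...,{h_n,h_1}.\<close>
definition closed_walk :: "('v,'h) hgraph \<Rightarrow> ('h \<times> 'h) list \<Rightarrow> bool" where
  "closed_walk G w \<longleftrightarrow> (\<forall>p\<in>set w. dir_single_trans G p) \<and>
     (\<forall>i<length w. {snd (w ! i), fst (w ! (Suc i mod length w))} \<in> edges G)"

definition walk_edges :: "('h \<times> 'h) list \<Rightarrow> 'h set set" where
  "walk_edges w = {{snd (w ! i), fst (w ! (Suc i mod length w))} | i. i < length w}"

definition walk_halfs :: "('h \<times> 'h) list \<Rightarrow> 'h list" where
  "walk_halfs w = concat (map (\<lambda>(a, b). [a, b]) w)"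

definition trans_set :: "('h \<times> 'h) list \<Rightarrow> 'h set set" where
  "trans_set w = (\<lambda>(a, b). {a, b}) ` set w"

definition sigma :: "('h set \<Rightarrow> 'h) \<Rightarrow> ('h \<times> 'h) list \<Rightarrow> 'h set \<Rightarrow> int" where
  "sigma tail w e = (\<Sum>i<length w.
     if {snd (w ! i), fst (w ! (Suc i mod length w))} = e
     then (if snd (w ! i) = tail e then 1 else -1) else 0)"

definition sigma_vec :: "('h set \<Rightarrow> 'h) \<Rightarrow> ('h \<times> 'h) list \<Rightarrow> 'h set \<Rightarrow> rat" where
  "sigma_vec tail w = (\<lambda>e. of_int (sigma tail w e))"

definition circuit_walk :: "('v,'h) hgraph \<Rightarrow> ('h \<times> 'h) list \<Rightarrow> bool" where
  "circuit_walk G w \<longleftrightarrow> closed_walk G w \<and> w \<noteq> [] \<and> distinct (walk_halfs w)"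

text \<open>A circuit (orientation and cyclic shift forgotten) is identified with the set of
  single transitions it uses.\<close>
definition circuit :: "('v,'h) hgraph \<Rightarrow> 'h set set \<Rightarrow> bool" where
  "circuit G C \<longleftrightarrow> (\<exists>w. circuit_walk G w \<and> trans_set w = C)"

definition incidence :: "('v,'h) hgraph \<Rightarrow> ('h set \<Rightarrow> 'h) \<Rightarrow> 'v \<Rightarrow> 'h set \<Rightarrow> rat" where
  "incidence G tail v e = (if inc G (tail e) = v then 1 else 0) - (if inc G (head tail e) = v then 1 else 0)"

definition cycle_space :: "('v,'h) hgraph \<Rightarrow> ('h set \<Rightarrow> 'h) \<Rightarrow> ('h set \<Rightarrow> rat) set" where
  "cycle_space G tail = {x. (\<forall>e. e \<notin> edges G \<longrightarrow> x e = 0) \<and>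
      (\<forall>v\<in>verts G. (\<Sum>e\<in>edges G. incidence G tail v e * x e) = 0)}"

definition lin_indep :: "('e \<Rightarrow> rat) set \<Rightarrow> bool" where
  "lin_indep S \<longleftrightarrow> (\<forall>T c. finite T \<and> T \<subseteq> S \<and> (\<lambda>e. \<Sum>x\<in>T. c x * x e) = (\<lambda>e. 0)
       \<longrightarrow> (\<forall>x\<in>T. c x = 0))"

definition lin_span :: "('e \<Rightarrow> rat) set \<Rightarrow> ('e \<Rightarrow> rat) set" where
  "lin_span S = {y. \<exists>T c. finite T \<and> T \<subseteq> S \<and> y = (\<lambda>e. \<Sum>x\<in>T. c x * x e)}"

definition cycle_basis :: "('v,'h) hgraph \<Rightarrow> ('h set \<Rightarrow> 'h) \<Rightarrow> ('h \<times> 'h) list set \<Rightarrow> bool" where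
  "cycle_basis G tail B \<longleftrightarrow> (\<forall>w\<in>B. closed_walk G w) \<and> inj_on (sigma_vec tail) B \<and>
     lin_indep (sigma_vec tail ` B) \<and> lin_span (sigma_vec tail ` B) = cycle_space G tail"

definition cycle_spanning_set :: "('v,'h) hgraph \<Rightarrow> ('h set \<Rightarrow> 'h) \<Rightarrow> ('h \<times> 'h) list set \<Rightarrow> bool" where
  "cycle_spanning_set G tail \<Gamma> \<longleftrightarrow> (\<forall>w\<in>\<Gamma>. closed_walk G w) \<and> (\<exists>B\<subseteq>\<Gamma>. cycle_basis G tail B)"

definition CM :: "('h set \<Rightarrow> 'h) \<Rightarrow> ('h \<times> 'h) list \<Rightarrow> 'h set \<Rightarrow> rat" where
  "CM tail W e = sigma_vec tail W e"

definition four_regular :: "('v,'h) hgraph \<Rightarrow> bool" where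
  "four_regular G \<longleftrightarrow> (\<forall>v\<in>verts G. card {h\<in>halfs G. inc G h = v} = 4)"

definition transitions :: "('v,'h) hgraph \<Rightarrow> 'h set set set" where
  "transitions G = {{s1, s2} | s1 s2 v. v \<in> verts G \<and> single_trans G s1 \<and> single_trans G s2 \<and>
      s1 \<inter> s2 = {} \<and> s1 \<union> s2 = {h\<in>halfs G. inc G h = v}}"

definition transitional_orientation :: "('v,'h) hgraph \<Rightarrow> ('h set set \<Rightarrow> 'h set) \<Rightarrow> bool" where
  "transitional_orientation G ori \<longleftrightarrow> (\<forall>t\<in>transitions G. ori t \<in> t)"

definition circuit_partition :: "('v,'h) hgraph \<Rightarrow> 'h set set set \<Rightarrow> bool" where
  "circuit_partition G P \<longleftrightarrow> (\<forall>C\<in>P. circuit G C) \<and>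
     (\<forall>h\<in>halfs G. \<exists>!p. fst p \<in> P \<and> snd p \<in> fst p \<and> h \<in> snd p)"

definition tau :: "('v,'h) hgraph \<Rightarrow> 'h set set set \<Rightarrow> 'h set set set" where
  "tau G P = {t \<in> transitions G. t \<subseteq> \<Union>P}"

definition touch_graph :: "('v,'h) hgraph \<Rightarrow> 'h set set set \<Rightarrow> ('h set set, 'h set) hgraph" where
  "touch_graph G P = \<lparr>verts = P, halfs = \<Union>P, edges = tau G P,
      inc = (\<lambda>s. THE C. C \<in> P \<and> s \<in> C)\<rparr>"

definition Delta :: "('h set \<Rightarrow> 'h) \<Rightarrow> ('h set set \<Rightarrow> 'h set) \<Rightarrow> 'h set \<Rightarrow> 'h set set \<Rightarrow> rat" where
  "Delta tail ori e t = (if \<exists>h. e \<inter> ori t = {h}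
      then (if e \<inter> ori t = {tail e} then 1 else if e \<inter> ori t = {head tail e} then -1 else 0) else 0)"

text \<open>Forests = independent sets of the cycle matroid: edge sets containing no circuit.\<close>
definition forest :: "('v,'h) hgraph \<Rightarrow> 'h set set \<Rightarrow> bool" where
  "forest G X \<longleftrightarrow> X \<subseteq> edges G \<and> \<not> (\<exists>w. circuit_walk G w \<and> walk_edges w \<subseteq> X)"

definition cm_basis :: "('v,'h) hgraph \<Rightarrow> 'h set set \<Rightarrow> bool" where
  "cm_basis G B \<longleftrightarrow> forest G B \<and> (\<forall>Y. forest G Y \<and> B \<subseteq> Y \<longrightarrow> Y = B)"

text \<open>Independent sets of the dual M*(G) of the cycle matroid: subsets of complements of bases.\<close>
definition cocycle_indep :: "('v,'h) hgraph \<Rightarrow> 'h set set \<Rightarrow> bool" where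
  "cocycle_indep G X \<longleftrightarrow> X \<subseteq> edges G \<and> (\<exists>B. cm_basis G B \<and> X \<inter> B = {})"

definition col_indep :: "'r set \<Rightarrow> 'c set \<Rightarrow> ('r \<Rightarrow> 'c \<Rightarrow> rat) \<Rightarrow> 'c set \<Rightarrow> bool" where
  "col_indep R C M X \<longleftrightarrow> X \<subseteq> C \<and> finite X \<and>
     (\<forall>a. (\<forall>r\<in>R. (\<Sum>c\<in>X. a c * M r c) = 0) \<longrightarrow> (\<forall>c\<in>X. a c = 0))"

definition represents_cographic :: "'r set \<Rightarrow> ('r \<Rightarrow> 'c set \<Rightarrow> rat) \<Rightarrow> ('u,'c) hgraph \<Rightarrow> bool" where
  "represents_cographic R M G \<longleftrightarrow> (\<forall>X. col_indep R (edges G) M X \<longleftrightarrow> cocycle_indep G X)"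

end

theory Submission
  imports Defs
begin

lemma isgD:
  assumes "is_graph G"
  shows "finite (halfs G)" "\<forall>e\<in>edges G. \<exists>a b. a \<noteq> b \<and> e = {a,b}" "\<Union>(edges G) = halfs G"
    "\<forall>e\<in>edges G. \<forall>e'\<in>edges G. e \<noteq> e' \<longrightarrow> e \<inter> e' = {}" "inc G ` halfs G \<subseteq> verts G" "finite (verts G)"
  using assms unfolding is_graph_def by simp_all

lemma g_edge2: "is_graph G \<Longrightarrow> e \<in> edges G \<Longrightarrow> \<exists>a b. a \<noteq> b \<and> e = {a,b}"
  using isgD(2) by blast

lemma g_disj: "is_graph G \<Longrightarrow> e \<in> edges G \<Longrightarrow> e' \<in> edges G \<Longrightarrow> h \<in> e \<Longrightarrow> h \<in> e' \<Longrightarrow> e = e'"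
  using isgD(4)[of G] by blast

lemma g_sub: "is_graph G \<Longrightarrow> e \<in> edges G \<Longrightarrow> e \<subseteq> halfs G"
  using isgD(3)[of G] by blast

lemma g_half: "is_graph G \<Longrightarrow> h \<in> halfs G \<Longrightarrow> \<exists>e\<in>edges G. h \<in> e"
  using isgD(3)[of G] by blast

lemma g_fin_halfs: "is_graph G \<Longrightarrow> finite (halfs G)"
  using isgD(1) by blast

lemma g_inc: "is_graph G \<Longrightarrow> h \<in> halfs G \<Longrightarrow> inc G h \<in> verts G"
  using isgD(5) by blast

lemma g_fin_edges: "is_graph G \<Longrightarrow> finite (edges G)"
proof -
  assume G: "is_graph G"
  have "edges G \<subseteq> Pow (halfs G)" using g_sub[OF G] by blast
  moreover have "finite (Pow (halfs G))" using g_fin_halfs[OF G] by simp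
  ultimately show ?thesis by (rule finite_subset)
qed

lemma g_edge_fin: "is_graph G \<Longrightarrow> e \<in> edges G \<Longrightarrow> finite e"
  using g_edge2[of G e] by auto

lemma head_props:
  assumes G: "is_graph G" and D: "directed_version G tail" and e: "e \<in> edges G"
  shows "head tail e \<in> e \<and> head tail e \<noteq> tail e \<and> e = {tail e, head tail e}"
proof -
  obtain a b where ab: "a \<noteq> b" "e = {a,b}" using g_edge2[OF G e] by blast
  have te: "tail e \<in> e" using D e unfolding directed_version_def by blast
  have ex: "\<exists>!h. h \<in> e \<and> h \<noteq> tail e" using ab te by auto
  have "head tail e \<in> e \<and> head tail e \<noteq> tail e"
    unfolding head_def by (rule theI'[OF ex])
  thus ?thesis using ab te by auto
qed

lemma sum_edges_halfs:
  assumes G: "is_graph G"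
  shows "(\<Sum>e\<in>edges G. \<Sum>h\<in>e. f h) = (\<Sum>h\<in>halfs G. f h)"
proof -
  have U: "\<Union>(edges G) = halfs G" using isgD(3)[OF G] .
  have "(\<Sum>h\<in>\<Union>(edges G). f h) = (\<Sum>e\<in>edges G. \<Sum>h\<in>e. f h)"
    by (rule sum.Union_disjoint[simplified]) (use g_edge_fin[OF G] isgD(4)[OF G] in auto)
  thus ?thesis using U by simp
qed

definition antisym_g :: "('v,'h) hgraph \<Rightarrow> ('h set \<Rightarrow> 'h) \<Rightarrow> ('h \<Rightarrow> rat) \<Rightarrow> bool" where
  "antisym_g G tail g \<longleftrightarrow> (\<forall>e\<in>edges G. g (tail e) + g (head tail e) = 0)"

lemma GL1:
  assumes G: "is_graph G" and D: "directed_version G tail" and A: "antisym_g G tail g"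
  shows "(\<Sum>e\<in>edges G. incidence G tail v e * g (tail e)) = (\<Sum>h\<in>{h\<in>halfs G. inc G h = v}. g h)"
proof -
  have "\<And>e. e \<in> edges G \<Longrightarrow> incidence G tail v e * g (tail e) = (\<Sum>h\<in>e. if inc G h = v then g h else 0)"
  proof -
    fix e assume e: "e \<in> edges G"
    have hp: "head tail e \<noteq> tail e" "e = {tail e, head tail e}" using head_props[OF G D e] by auto
    have gh: "g (head tail e) = - g (tail e)" using A e unfolding antisym_g_def by (simp add: eq_neg_iff_add_eq_0 add.commute)
    define a where "a = tail e"
    define b where "b = head tail e"
    have ab: "a \<noteq> b" "e = {a,b}" using hp a_def b_def by auto
    have gb: "g b = - g a" using gh a_def b_def by simp
    have "incidence G tail v e * g (tail e) = ((if inc G a = v then 1 else 0) - (if inc G b = v then 1 else 0)) * g a"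
      unfolding incidence_def a_def b_def by simp
    also have "\<dots> = (\<Sum>h\<in>{a,b}. if inc G h = v then g h else 0)"
      using ab(1) gb by auto
    finally show "incidence G tail v e * g (tail e) = (\<Sum>h\<in>e. if inc G h = v then g h else 0)"
      using ab(2) by simp
  qed
  hence "(\<Sum>e\<in>edges G. incidence G tail v e * g (tail e)) = (\<Sum>e\<in>edges G. \<Sum>h\<in>e. if inc G h = v then g h else 0)"
    by (rule sum.cong[OF refl])
  also have "\<dots> = (\<Sum>h\<in>halfs G. if inc G h = v then g h else 0)" by (rule sum_edges_halfs[OF G])
  also have "\<dots> = (\<Sum>h\<in>{h\<in>halfs G. inc G h = v}. g h)"
    using g_fin_halfs[OF G] by (simp add: sum.inter_filter)
  finally show ?thesis .
qed

lemma GL2: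
  assumes G: "is_graph G" and D: "directed_version G tail" and A: "antisym_g G tail g"
  shows "(\<Sum>e\<in>edges G. g (tail e) * Delta tail ori e t) = (\<Sum>h\<in>halfs G. if h \<in> ori t then g h else 0)"
proof -
  have "\<And>e. e \<in> edges G \<Longrightarrow> g (tail e) * Delta tail ori e t = (\<Sum>h\<in>e. if h \<in> ori t then g h else 0)"
  proof -
    fix e assume e: "e \<in> edges G"
    have hp: "head tail e \<noteq> tail e" "e = {tail e, head tail e}" using head_props[OF G D e] by auto
    have gh: "g (head tail e) = - g (tail e)" using A e unfolding antisym_g_def by (simp add: eq_neg_iff_add_eq_0 add.commute)
    define a where "a = tail e"
    define b where "b = head tail e"
    have ab: "a \<noteq> b" "e = {a,b}" using hp a_def b_def by auto
    have gb: "g b = - g a" using gh a_def b_def by simp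
    have ta: "tail e = a" using a_def by simp
    have hb: "head tail e = b" using b_def by simp
    show "g (tail e) * Delta tail ori e t = (\<Sum>h\<in>e. if h \<in> ori t then g h else 0)"
    proof (cases "a \<in> ori t"; cases "b \<in> ori t")
      assume A1: "a \<in> ori t" "b \<in> ori t"
      hence I: "e \<inter> ori t = {a,b}" using ab by auto
      have "\<not> (\<exists>h. e \<inter> ori t = {h})"
      proof
        assume "\<exists>h. e \<inter> ori t = {h}"
        then obtain h where "{a,b} = {h}" using I by auto
        hence "a = h" "b = h" by auto
        with ab show False by simp
      qed
      hence D: "Delta tail ori e t = 0" unfolding Delta_def by simp
      have S: "(\<Sum>h\<in>e. if h \<in> ori t then g h else 0) = g a + g b" using ab A1 by simp
      show ?thesis using D S gb by simp
    next
      assume A1: "a \<in> ori t" "b \<notin> ori t"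
      hence I: "e \<inter> ori t = {tail e}" using ab ta by auto
      hence D: "Delta tail ori e t = 1" unfolding Delta_def by simp
      have S: "(\<Sum>h\<in>e. if h \<in> ori t then g h else 0) = g a" using ab A1 by simp
      show ?thesis using D S ta by simp
    next
      assume A1: "a \<notin> ori t" "b \<in> ori t"
      hence I: "e \<inter> ori t = {head tail e}" using ab hb by auto
      have ne: "{head tail e} \<noteq> {tail e}" using ab ta hb by simp
      hence D: "Delta tail ori e t = -1" using I unfolding Delta_def by simp
      have S: "(\<Sum>h\<in>e. if h \<in> ori t then g h else 0) = g b" using ab A1 by simp
      show ?thesis using D S ta gb by simp
    next
      assume A1: "a \<notin> ori t" "b \<notin> ori t"
      hence I: "e \<inter> ori t = {}" using ab by auto
      hence D: "Delta tail ori e t = 0" unfolding Delta_def by simp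
      have S: "(\<Sum>h\<in>e. if h \<in> ori t then g h else 0) = 0" using ab A1 by simp
      show ?thesis using D S by simp
    qed
  qed
  hence "(\<Sum>e\<in>edges G. g (tail e) * Delta tail ori e t) = (\<Sum>e\<in>edges G. \<Sum>h\<in>e. if h \<in> ori t then g h else 0)"
    by (rule sum.cong[OF refl])
  also have "\<dots> = (\<Sum>h\<in>halfs G. if h \<in> ori t then g h else 0)" by (rule sum_edges_halfs[OF G])
  finally show ?thesis .
qed


definition fl :: "('h \<times> 'h) list \<Rightarrow> 'h \<Rightarrow> int" where
  "fl w h = (\<Sum>i<length w. (if snd (w!i) = h then 1 else 0) - (if fst (w!i) = h then 1 else 0))"

lemma sum_rot: "(\<Sum>i<n. f (Suc i mod n)) = (\<Sum>i<n. (f i :: 'a::comm_monoid_add))"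
proof (cases n)
  case 0 thus ?thesis by simp
next
  case (Suc m)
  have "(\<Sum>i<Suc m. f (Suc i mod Suc m)) = (\<Sum>i<m. f (Suc i mod Suc m)) + f (Suc m mod Suc m)" by simp
  also have "(\<Sum>i<m. f (Suc i mod Suc m)) = (\<Sum>i<m. f (Suc i))" by (rule sum.cong) auto
  finally have 1: "(\<Sum>i<Suc m. f (Suc i mod Suc m)) = (\<Sum>i<m. f (Suc i)) + f 0" by simp
  have "(\<Sum>i<Suc m. f i) = f 0 + (\<Sum>i<m. f (Suc i))" by (rule sum.lessThan_Suc_shift)
  thus ?thesis using 1 Suc by (simp add: add.commute)
qed

lemma cw_edge: "closed_walk G w \<Longrightarrow> i < length w \<Longrightarrow> {snd (w!i), fst (w!(Suc i mod length w))} \<in> edges G"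
  unfolding closed_walk_def by blast

lemma cw_dst: "closed_walk G w \<Longrightarrow> i < length w \<Longrightarrow> dir_single_trans G (w!i)"
  unfolding closed_walk_def using nth_mem by blast

lemma cw_halfs: assumes "closed_walk G w" "i < length w"
  shows "fst (w!i) \<in> halfs G" "snd (w!i) \<in> halfs G" "fst (w!i) \<noteq> snd (w!i)" "inc G (fst (w!i)) = inc G (snd (w!i))"
  using cw_dst[OF assms] unfolding dir_single_trans_def by auto

lemma pair_edge_ne: "is_graph G \<Longrightarrow> {x,y} \<in> edges G \<Longrightarrow> x \<noteq> y"
proof
  assume G: "is_graph G" and e: "{x,y} \<in> edges G" and xy: "x = y"
  obtain a b where "a \<noteq> b" "{x,y} = {a,b}" using g_edge2[OF G e] by blast
  thus False using xy by (metis doubleton_eq_iff)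
qed

lemma K_lemma:
  assumes G: "is_graph G" and W: "closed_walk G w" and e: "e \<in> edges G" and ab: "e = {a,b}" "a \<noteq> b"
  shows "(\<Sum>i<length w. if snd (w!i) = b then 1 else 0 :: int) = (\<Sum>i<length w. if fst (w!i) = a then 1 else 0)"
proof -
  let ?n = "length w"
  have t: "(snd (w!i) = b) = (fst (w!(Suc i mod ?n)) = a)" if i: "i < ?n" for i
  proof -
    let ?ei = "{snd (w!i), fst (w!(Suc i mod ?n))}"
    have ei: "?ei \<in> edges G" by (rule cw_edge[OF W i])
    have ne: "snd (w!i) \<noteq> fst (w!(Suc i mod ?n))" by (rule pair_edge_ne[OF G ei])
    show ?thesis
    proof
      assume "snd (w!i) = b"
      hence "?ei = e" using g_disj[OF G ei e, of b] ab by auto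
      thus "fst (w!(Suc i mod ?n)) = a" using ne ab \<open>snd (w!i) = b\<close> by (metis doubleton_eq_iff)
    next
      assume "fst (w!(Suc i mod ?n)) = a"
      hence "?ei = e" using g_disj[OF G ei e, of a] ab by auto
      thus "snd (w!i) = b" using ne ab \<open>fst (w!(Suc i mod ?n)) = a\<close> by (metis doubleton_eq_iff)
    qed
  qed
  have "(\<Sum>i<?n. if snd (w!i) = b then 1 else 0 :: int) = (\<Sum>i<?n. if fst (w!(Suc i mod ?n)) = a then 1 else 0)"
    by (rule sum.cong) (use t in auto)
  also have "\<dots> = (\<Sum>i<?n. if fst (w!i) = a then 1 else 0)"
    by (rule sum_rot[where f = "\<lambda>j. if fst (w!j) = a then 1 else 0"])
  finally show ?thesis .
qed

lemma WL1:
  assumes G: "is_graph G" and D: "directed_version G tail" and W: "closed_walk G w" and e: "e \<in> edges G"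
  shows "sigma tail w e = fl w (tail e)"
proof -
  let ?n = "length w"
  have hp: "head tail e \<noteq> tail e" "e = {tail e, head tail e}" using head_props[OF G D e] by auto
  define a where "a = tail e"
  define b where "b = head tail e"
  have ab: "a \<noteq> b" "e = {a,b}" using hp a_def b_def by auto
  have t: "(if {snd (w ! i), fst (w ! (Suc i mod ?n))} = e then (if snd (w ! i) = tail e then 1 else -1) else 0)
     = (if snd (w!i) = a then 1 else 0) - (if snd (w!i) = b then 1 else (0::int))" if i: "i < ?n" for i
  proof -
    let ?ei = "{snd (w!i), fst (w!(Suc i mod ?n))}"
    have ei: "?ei \<in> edges G" by (rule cw_edge[OF W i])
    show ?thesis
    proof (cases "?ei = e")
      case True
      hence "snd (w!i) = a \<or> snd (w!i) = b" using ab by auto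
      have ta: "tail e = a" using a_def by simp
      show ?thesis using True ab(1) ta \<open>snd (w!i) = a \<or> snd (w!i) = b\<close> by auto
    next
      case False
      hence "snd (w!i) \<notin> e" using g_disj[OF G ei e, of "snd (w!i)"] by auto
      thus ?thesis using False ab by auto
    qed
  qed
  have "sigma tail w e = (\<Sum>i<?n. (if snd (w!i) = a then 1 else 0) - (if snd (w!i) = b then 1 else (0::int)))"
    unfolding sigma_def by (rule sum.cong) (use t in auto)
  also have "\<dots> = (\<Sum>i<?n. if snd (w!i) = a then 1 else 0) - (\<Sum>i<?n. if snd (w!i) = b then 1 else (0::int))"
    by (rule sum_subtractf)
  also have "(\<Sum>i<?n. if snd (w!i) = b then 1 else (0::int)) = (\<Sum>i<?n. if fst (w!i) = a then 1 else 0)"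
    by (rule K_lemma[OF G W e ab(2) ab(1)])
  also have "(\<Sum>i<?n. if snd (w!i) = a then 1 else 0) - (\<Sum>i<?n. if fst (w!i) = a then 1 else (0::int)) = fl w a"
    unfolding fl_def by (rule sum_subtractf[symmetric])
  finally show ?thesis using a_def by simp
qed

lemma WL2:
  assumes G: "is_graph G" and D: "directed_version G tail" and W: "closed_walk G w" and e: "e \<in> edges G"
  shows "fl w (tail e) + fl w (head tail e) = 0"
proof -
  let ?n = "length w"
  have hp: "head tail e \<noteq> tail e" "e = {tail e, head tail e}" using head_props[OF G D e] by auto
  define a where "a = tail e"
  define b where "b = head tail e"
  have ab: "a \<noteq> b" "e = {a,b}" "e = {b,a}" using hp a_def b_def by auto
  have 1: "(\<Sum>i<?n. if snd (w!i) = b then 1 else 0 :: int) = (\<Sum>i<?n. if fst (w!i) = a then 1 else 0)"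
    by (rule K_lemma[OF G W e ab(2) ab(1)])
  have 2: "(\<Sum>i<?n. if snd (w!i) = a then 1 else 0 :: int) = (\<Sum>i<?n. if fst (w!i) = b then 1 else 0)"
    by (rule K_lemma[OF G W e ab(3)]) (use ab in auto)
  have "fl w a + fl w b = ((\<Sum>i<?n. if snd (w!i) = a then 1 else 0) - (\<Sum>i<?n. if fst (w!i) = a then 1 else 0))
     + ((\<Sum>i<?n. if snd (w!i) = b then 1 else 0) - (\<Sum>i<?n. if fst (w!i) = b then 1 else (0::int)))"
    unfolding fl_def by (simp add: sum_subtractf)
  also have "\<dots> = 0" using 1 2 by simp
  finally show ?thesis using a_def b_def by simp
qed

lemma WL3:
  assumes W: "closed_walk G w" and e: "e \<notin> edges G"
  shows "sigma tail w e = 0"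
  unfolding sigma_def
proof (rule sum.neutral, rule ballI)
  fix i assume "i \<in> {..<length w}"
  hence "{snd (w ! i), fst (w ! (Suc i mod length w))} \<in> edges G" using cw_edge[OF W] by simp
  hence "{snd (w ! i), fst (w ! (Suc i mod length w))} \<noteq> e" using e by auto
  thus "(if {snd (w ! i), fst (w ! (Suc i mod length w))} = e then if snd (w ! i) = tail e then 1 else - 1 else 0) = 0" by simp
qed

lemma WL4:
  assumes W: "closed_walk G w" and h: "h \<notin> halfs G"
  shows "fl w h = 0"
  unfolding fl_def by (rule sum.neutral) (use cw_halfs[OF W] h in force)

lemma WL5:
  assumes G: "is_graph G" and W: "closed_walk G w"
  shows "(\<Sum>h\<in>{h\<in>halfs G. inc G h = v}. fl w h) = 0"
proof -
  let ?H = "{h\<in>halfs G. inc G h = v}"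
  have fH: "finite ?H" using g_fin_halfs[OF G] by simp
  have "(\<Sum>h\<in>?H. fl w h) = (\<Sum>i<length w. \<Sum>h\<in>?H. (if snd (w!i) = h then 1 else 0) - (if fst (w!i) = h then 1 else 0))"
    unfolding fl_def by (rule sum.swap)
  also have "\<dots> = (\<Sum>i<length w. (0::int))"
  proof (rule sum.cong[OF refl])
    fix i assume "i \<in> {..<length w}"
    hence i: "i < length w" by simp
    have "(\<Sum>h\<in>?H. (if snd (w!i) = h then 1 else 0) - (if fst (w!i) = h then 1 else (0::int)))
       = (\<Sum>h\<in>?H. (if snd (w!i) = h then 1 else 0)) - (\<Sum>h\<in>?H. (if fst (w!i) = h then 1 else (0::int)))"
      by (rule sum_subtractf)
    also have "\<dots> = (if snd (w!i) \<in> ?H then 1 else 0) - (if fst (w!i) \<in> ?H then 1 else 0)"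
      using fH by simp
    also have "\<dots> = 0"
    proof -
      have "(snd (w!i) \<in> ?H) = (fst (w!i) \<in> ?H)" using cw_halfs[OF W i] by auto
      thus ?thesis by simp
    qed
    finally show "(\<Sum>h\<in>?H. (if snd (w!i) = h then 1 else 0) - (if fst (w!i) = h then 1 else (0::int))) = 0" .
  qed
  finally show ?thesis by simp
qed

lemma wh_Cons: "walk_halfs (p # w) = fst p # snd p # walk_halfs w"
  unfolding walk_halfs_def by (cases p) simp

lemma wh_len: "length (walk_halfs w) = 2 * length w"
  by (induction w) (auto simp: wh_Cons walk_halfs_def)

lemma wh_nth: "a < 2 * length w \<Longrightarrow> walk_halfs w ! a = (if even a then fst (w ! (a div 2)) else snd (w ! (a div 2)))"
proof (induction w arbitrary: a)
  case Nil thus ?case by simp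
next
  case (Cons p w)
  show ?case
  proof (cases a)
    case 0 thus ?thesis by (simp add: wh_Cons)
  next
    case (Suc a1)
    show ?thesis
    proof (cases a1)
      case 0 thus ?thesis using Suc by (simp add: wh_Cons)
    next
      case (Suc a2)
      have "a2 < 2 * length w" using Cons.prems \<open>a = Suc a1\<close> Suc by simp
      hence "walk_halfs w ! a2 = (if even a2 then fst (w ! (a2 div 2)) else snd (w ! (a2 div 2)))" by (rule Cons.IH)
      thus ?thesis using \<open>a = Suc a1\<close> Suc by (simp add: wh_Cons)
    qed
  qed
qed

lemma DW:
  assumes d: "distinct (walk_halfs w)" and i: "i < length w" and j: "j < length w"
  shows "fst (w!i) = fst (w!j) \<Longrightarrow> i = j" "snd (w!i) = snd (w!j) \<Longrightarrow> i = j" "fst (w!i) \<noteq> snd (w!j)"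
proof -
  have f: "walk_halfs w ! (2*k) = fst (w!k)" if "k < length w" for k
    using wh_nth[of "2*k" w] that by simp
  have s: "walk_halfs w ! (2*k+1) = snd (w!k)" if "k < length w" for k
    using wh_nth[of "2*k+1" w] that by simp
  have L: "length (walk_halfs w) = 2 * length w" by (rule wh_len)
  show "fst (w!i) = fst (w!j) \<Longrightarrow> i = j"
    using nth_eq_iff_index_eq[OF d, of "2*i" "2*j"] f[OF i] f[OF j] L i j by simp
  show "snd (w!i) = snd (w!j) \<Longrightarrow> i = j"
    using nth_eq_iff_index_eq[OF d, of "2*i+1" "2*j+1"] s[OF i] s[OF j] L i j by simp
  show "fst (w!i) \<noteq> snd (w!j)"
  proof
    assume "fst (w!i) = snd (w!j)"
    hence "2*i = 2*j+1" using nth_eq_iff_index_eq[OF d, of "2*i" "2*j+1"] f[OF i] s[OF j] L i j by simp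
    thus False by presburger
  qed
qed

lemma DW':
  assumes "\<And>i j. i < length w \<Longrightarrow> j < length w \<Longrightarrow> fst (w!i) = fst (w!j) \<Longrightarrow> i = j"
    and "\<And>i j. i < length w \<Longrightarrow> j < length w \<Longrightarrow> snd (w!i) = snd (w!j) \<Longrightarrow> i = j"
    and "\<And>i j. i < length w \<Longrightarrow> j < length w \<Longrightarrow> fst (w!i) \<noteq> snd (w!j)"
  shows "distinct (walk_halfs w)"
proof (subst distinct_conv_nth, intro allI impI)
  fix a b assume a: "a < length (walk_halfs w)" and b: "b < length (walk_halfs w)" and ab: "a \<noteq> b"
  have a': "a < 2 * length w" "a div 2 < length w" using a wh_len[of w] by auto
  have b': "b < 2 * length w" "b div 2 < length w" using b wh_len[of w] by auto
  note N = wh_nth[OF a'(1)] wh_nth[OF b'(1)]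
  show "walk_halfs w ! a \<noteq> walk_halfs w ! b"
  proof (cases "even a"; cases "even b")
    assume "even a" "even b"
    hence "a div 2 \<noteq> b div 2" using ab by (auto elim!: evenE)
    thus ?thesis using assms(1)[OF a'(2) b'(2)] \<open>even a\<close> \<open>even b\<close> N by auto
  next
    assume "odd a" "odd b"
    hence "a div 2 \<noteq> b div 2" using ab by (auto elim!: oddE)
    thus ?thesis using assms(2)[OF a'(2) b'(2)] \<open>odd a\<close> \<open>odd b\<close> N by auto
  next
    assume "even a" "odd b"
    thus ?thesis using assms(3)[OF a'(2) b'(2)] N by auto
  next
    assume "odd a" "even b"
    thus ?thesis using assms(3)[OF b'(2) a'(2)] N by auto
  qed
qed

lemma walk_edge_inj:
  assumes d: "distinct (walk_halfs w)" and i: "i < length w" and j: "j < length w"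
    and eq: "{snd (w!i), fst (w!(Suc i mod length w))} = {snd (w!j), fst (w!(Suc j mod length w))}"
  shows "i = j"
proof -
  have "snd (w!i) = snd (w!j) \<or> snd (w!i) = fst (w!(Suc j mod length w))" using eq by blast
  moreover have "Suc j mod length w < length w" by (rule mod_less_divisor) (use j in auto)
  ultimately show ?thesis using DW(2)[OF d i j] DW(3)[OF d _ i, of "Suc j mod length w"] by force
qed


lemma ts_nth: "s \<in> trans_set w \<longleftrightarrow> (\<exists>m<length w. s = {fst (w!m), snd (w!m)})"
proof
  assume "s \<in> trans_set w"
  then obtain p where p: "p \<in> set w" "s = (\<lambda>(a,b). {a,b}) p" unfolding trans_set_def by blast
  then obtain m where m: "m < length w" "w!m = p" by (auto simp: in_set_conv_nth)
  thus "\<exists>m<length w. s = {fst (w!m), snd (w!m)}" using p(2) by (cases p) auto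
next
  assume "\<exists>m<length w. s = {fst (w!m), snd (w!m)}"
  then obtain m where m: "m < length w" "s = {fst (w!m), snd (w!m)}" by blast
  have wm: "w!m \<in> set w" using m(1) by simp
  have "s = (\<lambda>(a,b). {a,b}) (w!m)" using m(2) by (simp add: case_prod_beta)
  thus "s \<in> trans_set w" unfolding trans_set_def using wm by (rule image_eqI)
qed

locale thm9 =
  fixes F :: "('v,'h) hgraph" and tail :: "'h set \<Rightarrow> 'h" and ori :: "'h set set \<Rightarrow> 'h set"
    and P :: "'h set set set" and E :: "'h set set" and \<Gamma> :: "('h \<times> 'h) list set"
  assumes G: "is_graph F" and R4: "four_regular F" and DV: "directed_version F tail"
    and TO: "transitional_orientation F ori" and CP: "circuit_partition F P" and ES: "E \<subseteq> edges F"
    and EC: "\<forall>C\<in>P. \<forall>w. circuit_walk F w \<and> trans_set w = C \<longrightarrow> card (walk_edges w \<inter> E) \<le> 1"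
    and CS: "cycle_spanning_set (del_edges F E) tail \<Gamma>"
begin

abbreviation "T \<equiv> touch_graph F P"
abbreviation "\<tau> \<equiv> tau F P"
definition Hv :: "'v \<Rightarrow> 'h set" where "Hv v = {h\<in>halfs F. inc F h = v}"

lemma CP1: "\<forall>C\<in>P. circuit F C"
  using CP by (simp add: circuit_partition_def)

lemma CP2: "h \<in> halfs F \<Longrightarrow> \<exists>!p. fst p \<in> P \<and> snd p \<in> fst p \<and> h \<in> snd p"
  using CP by (simp add: circuit_partition_def)

lemma circ_walk: "C \<in> P \<Longrightarrow> \<exists>c. circuit_walk F c \<and> trans_set c = C"
proof -
  assume "C \<in> P"
  hence "circuit F C" using CP1 by blast
  thus ?thesis unfolding circuit_def .
qed

lemma ST: assumes "s \<in> C" "C \<in> P"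
  shows "\<exists>a b. s = {a,b} \<and> a \<noteq> b \<and> a \<in> halfs F \<and> b \<in> halfs F \<and> inc F a = inc F b"
proof -
  obtain c where c: "circuit_walk F c" "trans_set c = C" using circ_walk[OF assms(2)] by blast
  have "\<exists>m<length c. s = {fst (c!m), snd (c!m)}" using ts_nth[of s c] assms(1) c(2) by simp
  then obtain m where m: "m < length c" "s = {fst (c!m), snd (c!m)}" by blast
  have W: "closed_walk F c" using c unfolding circuit_walk_def by simp
  show ?thesis by (intro exI[of _ "fst (c!m)"] exI[of _ "snd (c!m)"]) (use cw_halfs[OF W m(1)] m(2) in simp)
qed

lemma ST_single: assumes "s \<in> C" "C \<in> P" shows "single_trans F s"
proof -
  obtain a b where "s = {a,b} \<and> a \<noteq> b \<and> a \<in> halfs F \<and> b \<in> halfs F \<and> inc F a = inc F b" using ST[OF assms] by blast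
  thus ?thesis unfolding single_trans_def dir_single_trans_def by auto
qed

lemma ST_sub: "s \<in> C \<Longrightarrow> C \<in> P \<Longrightarrow> s \<subseteq> halfs F"
  using ST by blast

lemma ST_card: assumes "s \<in> C" "C \<in> P" shows "card s = 2"
proof -
  obtain a b where "s = {a,b} \<and> a \<noteq> b" using ST[OF assms] by blast
  thus ?thesis by simp
qed

lemma ST_ne: "s \<in> C \<Longrightarrow> C \<in> P \<Longrightarrow> s \<noteq> {}"
  using ST by blast

lemma ST_vert: assumes "s \<in> C" "C \<in> P" "h \<in> s" "h' \<in> s" shows "inc F h = inc F h'"
  using ST[OF assms(1,2)] assms(3,4) by auto

lemma U1: assumes "s \<in> C" "C \<in> P" "s' \<in> C'" "C' \<in> P" "h \<in> s" "h \<in> s'"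
  shows "s = s' \<and> C = C'"
proof -
  have h: "h \<in> halfs F" using ST_sub[OF assms(1,2)] assms(5) by blast
  have u: "\<exists>!p. fst p \<in> P \<and> snd p \<in> fst p \<and> h \<in> snd p" using CP2[OF h] .
  have "fst (C,s) \<in> P \<and> snd (C,s) \<in> fst (C,s) \<and> h \<in> snd (C,s)" using assms by simp
  moreover have "fst (C',s') \<in> P \<and> snd (C',s') \<in> fst (C',s') \<and> h \<in> snd (C',s')" using assms by simp
  ultimately have "(C,s) = (C',s')" using u unfolding Ex1_def by blast
  thus ?thesis by simp
qed

lemma cover: "h \<in> halfs F \<Longrightarrow> \<exists>C\<in>P. \<exists>s\<in>C. h \<in> s"
proof -
  assume "h \<in> halfs F"
  then obtain p where "fst p \<in> P \<and> snd p \<in> fst p \<and> h \<in> snd p" using CP2 by blast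
  thus ?thesis by blast
qed

lemma finSP: "finite (\<Union>P)"
proof -
  have "\<Union>P \<subseteq> Pow (halfs F)" using ST_sub by blast
  moreover have "finite (Pow (halfs F))" using g_fin_halfs[OF G] by simp
  ultimately show ?thesis by (rule finite_subset)
qed

lemma finP: "finite P"
proof -
  have "P \<subseteq> Pow (\<Union>P)" by blast
  moreover have "finite (Pow (\<Union>P))" using finSP by simp
  ultimately show ?thesis by (rule finite_subset)
qed

lemma finC: "C \<in> P \<Longrightarrow> finite C"
  by (rule finite_subset[OF _ finSP]) blast

lemma fin_tau: "finite \<tau>"
proof -
  have "\<tau> \<subseteq> Pow (\<Union>P)" unfolding tau_def by blast
  moreover have "finite (Pow (\<Union>P))" using finSP by simp
  ultimately show ?thesis by (rule finite_subset)
qed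

lemma incT: assumes "s \<in> C" "C \<in> P" shows "inc T s = C"
proof -
  obtain h where h: "h \<in> s" using ST_ne[OF assms] by blast
  have e: "inc T s = (THE C. C \<in> P \<and> s \<in> C)" by (simp add: touch_graph_def)
  show ?thesis unfolding e
  proof (rule the_equality)
    show "C \<in> P \<and> s \<in> C" using assms by simp
  next
    fix C' assume "C' \<in> P \<and> s \<in> C'"
    thus "C' = C" using U1[OF _ _ assms(1,2) h h, of C'] by blast
  qed
qed

lemma incT': "s \<in> \<Union>P \<Longrightarrow> inc T s \<in> P \<and> s \<in> inc T s"
  using incT by auto

lemma Hv_fin: "finite (Hv v)"
  unfolding Hv_def using g_fin_halfs[OF G] by simp

lemma T1: assumes "t \<in> \<tau>"
  shows "\<exists>s1 s2 v. t = {s1,s2} \<and> s1 \<in> \<Union>P \<and> s2 \<in> \<Union>P \<and> s1 \<inter> s2 = {} \<and> s1 \<union> s2 = Hv v \<and> v \<in> verts F \<and> s1 \<noteq> s2"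
proof -
  have t: "t \<in> transitions F" "t \<subseteq> \<Union>P" using assms unfolding tau_def by auto
  have "\<exists>s1 s2 v. t = {s1,s2} \<and> v \<in> verts F \<and> single_trans F s1 \<and> single_trans F s2 \<and>
    s1 \<inter> s2 = {} \<and> s1 \<union> s2 = {h\<in>halfs F. inc F h = v}" using t(1) unfolding transitions_def by (simp only: mem_Collect_eq)
  then obtain s1 s2 v where d: "t = {s1,s2}" "v \<in> verts F" "single_trans F s1" "single_trans F s2"
    "s1 \<inter> s2 = {}" "s1 \<union> s2 = Hv v" unfolding Hv_def by blast
  have "s1 \<noteq> {}" using d(3) unfolding single_trans_def by auto
  hence "s1 \<noteq> s2" using d(5) by auto
  moreover have "s1 \<in> \<Union>P" "s2 \<in> \<Union>P" using t(2) d(1) by auto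
  ultimately show ?thesis using d by (intro exI[of _ s1] exI[of _ s2] exI[of _ v]) simp
qed

lemma T1': assumes "t \<in> \<tau>" "s \<in> t"
  shows "\<exists>v. t = {s, Hv v - s} \<and> s \<subseteq> Hv v \<and> s \<noteq> {} \<and> s \<in> \<Union>P \<and> Hv v - s \<in> \<Union>P \<and> s \<noteq> Hv v - s \<and> v \<in> verts F"
proof -
  obtain s1 s2 v where d: "t = {s1,s2}" "s1 \<in> \<Union>P" "s2 \<in> \<Union>P" "s1 \<inter> s2 = {}" "s1 \<union> s2 = Hv v" "v \<in> verts F" "s1 \<noteq> s2"
    using T1[OF assms(1)] by metis
  have ne: "s1 \<noteq> {}" "s2 \<noteq> {}" using d(2,3) ST_ne by auto
  have "s = s1 \<or> s = s2" using assms(2) d(1) by auto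
  thus ?thesis
  proof
    assume "s = s1"
    moreover have "Hv v - s1 = s2" using d(4,5) by blast
    ultimately show ?thesis using d ne by (intro exI[of _ v]) auto
  next
    assume "s = s2"
    moreover have "Hv v - s2 = s1" using d(4,5) by blast
    ultimately show ?thesis using d ne by (intro exI[of _ v]) auto
  qed
qed

lemma T2: assumes "t \<in> \<tau>" "t' \<in> \<tau>" "s \<in> t" "s \<in> t'" shows "t = t'"
proof -
  obtain v where v: "t = {s, Hv v - s}" "s \<subseteq> Hv v" "s \<noteq> {}" using T1'[OF assms(1,3)] by blast
  obtain v' where v': "t' = {s, Hv v' - s}" "s \<subseteq> Hv v'" using T1'[OF assms(2,4)] by blast
  obtain h where "h \<in> s" using v(3) by blast
  hence "v = v'" using v(2) v'(2) unfolding Hv_def by auto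
  thus ?thesis using v v' by simp
qed

lemma T3: assumes "s \<in> \<Union>P" shows "\<exists>t\<in>\<tau>. s \<in> t"
proof -
  obtain C where C: "C \<in> P" "s \<in> C" using assms by blast
  obtain a b where ab: "s = {a,b}" "a \<noteq> b" "a \<in> halfs F" "b \<in> halfs F" "inc F a = inc F b"
    using ST[OF C(2,1)] by blast
  define v where "v = inc F a"
  have v: "v \<in> verts F" using g_inc[OF G ab(3)] v_def by simp
  have c4: "card (Hv v) = 4" using R4 v unfolding four_regular_def Hv_def by blast
  have sH: "s \<subseteq> Hv v" using ab v_def unfolding Hv_def by auto
  have cs: "card s = 2" using ab by simp
  have c2: "card (Hv v - s) = 2" using c4 cs sH Hv_fin by (simp add: card_Diff_subset finite_subset)
  then obtain c where c: "c \<in> Hv v - s" by (metis card.empty ex_in_conv zero_neq_numeral)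
  have ch: "c \<in> halfs F" "inc F c = v" using c unfolding Hv_def by auto
  obtain C' s' where C': "C' \<in> P" "s' \<in> C'" "c \<in> s'" using cover[OF ch(1)] by blast
  have s'H: "s' \<subseteq> Hv v"
  proof
    fix x assume "x \<in> s'"
    thus "x \<in> Hv v" using ST_vert[OF C'(2,1) _ C'(3)] ST_sub[OF C'(2,1)] ch(2) unfolding Hv_def by auto
  qed
  have dj: "s' \<inter> s = {}"
  proof (rule ccontr)
    assume "s' \<inter> s \<noteq> {}"
    then obtain x where "x \<in> s'" "x \<in> s" by blast
    hence "s' = s" using U1[OF C'(2,1) C(2,1)] by blast
    thus False using c C'(3) by blast
  qed
  have "s' \<subseteq> Hv v - s" using s'H dj by blast
  moreover have "card s' = 2" using ST_card[OF C'(2,1)] .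
  ultimately have s'eq: "s' = Hv v - s" using c2 Hv_fin by (metis card_subset_eq finite_Diff)
  have "{s, s'} \<in> transitions F"
    unfolding transitions_def
    using v ST_single[OF C(2,1)] ST_single[OF C'(2,1)] dj sH s'eq unfolding Hv_def by blast
  moreover have "{s,s'} \<subseteq> \<Union>P" using C C' by blast
  ultimately show ?thesis unfolding tau_def by blast
qed

lemma CEC: assumes C: "C \<in> P" and h: "h \<in> \<Union>C" and e: "e \<in> edges F" "h \<in> e"
  shows "e \<subseteq> \<Union>C"
proof -
  obtain c where c: "circuit_walk F c" "trans_set c = C" using circ_walk[OF C] by blast
  have W: "closed_walk F c" using c unfolding circuit_walk_def by simp
  let ?n = "length c"
  obtain s where s: "s \<in> C" "h \<in> s" using h by blast
  have "\<exists>m<?n. s = {fst (c!m), snd (c!m)}" using ts_nth[of s c] s(1) c(2) by simp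
  then obtain m where m: "m < ?n" "s = {fst (c!m), snd (c!m)}" by blast
  have inC: "{fst (c!k), snd (c!k)} \<in> C" if "k < ?n" for k using c(2) ts_nth[of _ c] that by auto
  have "h = fst (c!m) \<or> h = snd (c!m)" using s m by auto
  thus ?thesis
  proof
    assume hs: "h = snd (c!m)"
    let ?e = "{snd (c!m), fst (c!(Suc m mod ?n))}"
    have ee: "?e \<in> edges F" by (rule cw_edge[OF W m(1)])
    have "?e = e" using g_disj[OF G ee e(1), of h] hs e(2) by simp
    moreover have "Suc m mod ?n < ?n" using m(1) by (intro mod_less_divisor) auto
    ultimately show ?thesis using inC[OF m(1)] inC[of "Suc m mod ?n"] by blast
  next
    assume hs: "h = fst (c!m)"
    define j where "j = (m + ?n - 1) mod ?n"
    have j: "j < ?n" unfolding j_def by (rule mod_less_divisor) (use m(1) in auto)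
    have sj: "Suc j mod ?n = m"
    proof (cases m)
      case 0 thus ?thesis using j_def m(1) by (simp add: mod_Suc)
    next
      case (Suc m') thus ?thesis using j_def m(1) by (simp add: mod_Suc)
    qed
    let ?e = "{snd (c!j), fst (c!(Suc j mod ?n))}"
    have ee: "?e \<in> edges F" by (rule cw_edge[OF W j])
    have "?e = e" using g_disj[OF G ee e(1), of h] hs e(2) sj by simp
    thus ?thesis using inC[OF m(1)] inC[OF j] sj by blast
  qed
qed

end

lemma dform: "(m::nat) < n \<Longrightarrow> p < n \<Longrightarrow> (m + n - p) mod n = (if p \<le> m then m - p else m + n - p)"
proof (cases "p \<le> m")
  case True
  assume "m < n" "p < n"
  have "m + n - p = (m - p) + n" using True by arith
  hence "(m + n - p) mod n = (m - p) mod n" by simp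
  thus ?thesis using True \<open>m < n\<close> by simp
next
  case False
  assume "m < n" "p < n"
  thus ?thesis using False by simp
qed

lemma prform: "(m::nat) < n \<Longrightarrow> (m + n - 1) mod n = (if m = 0 then n - 1 else m - 1)"
proof (cases "m = 0")
  case True
  assume "m < n" thus ?thesis using True by simp
next
  case False
  assume "m < n"
  have "m + n - 1 = (m - 1) + n" using False \<open>m < n\<close> by arith
  hence "(m + n - 1) mod n = (m - 1) mod n" by simp
  thus ?thesis using False \<open>m < n\<close> by simp
qed

lemma suc_mod_iff: "(j::nat) < n \<Longrightarrow> m < n \<Longrightarrow> (Suc j mod n = m) = (j = (m + n - 1) mod n)"
proof -
  assume j: "j < n" and m: "m < n"
  have sj: "Suc j mod n = (if Suc j = n then 0 else Suc j)" using j by (simp add: mod_Suc)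
  show ?thesis unfolding sj prform[OF m] using j m by auto
qed

lemma dpr: assumes m: "(m::nat) < n" and p: "p < n"
  shows "(((m + n - 1) mod n) + n - p) mod n = (if (m + n - p) mod n = 0 then n - 1 else (m + n - p) mod n - 1)"
proof -
  have pm: "(m + n - 1) mod n < n" using m by (intro mod_less_divisor) auto
  note d1 = dform[OF pm p] and d2 = dform[OF m p] and pf = prform[OF m]
  show ?thesis
  proof (cases "m = 0")
    case True
    hence "(m + n - 1) mod n = n - 1" using pf by simp
    thus ?thesis using d1 d2 True p by auto
  next
    case False
    hence e: "(m + n - 1) mod n = m - 1" using pf by simp
    show ?thesis
    proof (cases "p \<le> m - 1")
      case True thus ?thesis using d1 d2 e False by auto
    next
      case F2: False
      show ?thesis
      proof (cases "p = m")
        case True thus ?thesis using d1 d2 e False F2 m by auto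
      next
        case F3: False
        hence "\<not> p \<le> m" using F2 by auto
        thus ?thesis using d1 d2 e False F2 m p by auto
      qed
    qed
  qed
qed

lemma dzero: "(m::nat) < n \<Longrightarrow> p < n \<Longrightarrow> ((m + n - p) mod n = 0) = (m = p)"
  using dform[of m n p] by auto

lemma dinj: "(m::nat) < n \<Longrightarrow> q < n \<Longrightarrow> p < n \<Longrightarrow> ((m + n - p) mod n = (q + n - p) mod n) = (m = q)"
  using dform[of m n p] dform[of q n p] by (auto split: if_splits)

context thm9
begin

definition gJ :: "('h \<times> 'h) list \<Rightarrow> nat set \<Rightarrow> 'h \<Rightarrow> rat" where
  "gJ c J h = (\<Sum>j\<in>J. (if h = snd (c!j) then 1 else 0) - (if h = fst (c!(Suc j mod length c)) then 1 else 0))"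

lemma gJ_antisym:
  assumes W: "closed_walk F c" and J: "J \<subseteq> {..<length c}"
  shows "antisym_g F tail (gJ c J)"
  unfolding antisym_g_def
proof
  fix e assume e: "e \<in> edges F"
  let ?n = "length c"
  have hp: "head tail e \<noteq> tail e" "e = {tail e, head tail e}" using head_props[OF G DV e] by auto
  define a where "a = tail e"
  define b where "b = head tail e"
  have ab: "a \<noteq> b" "e = {a,b}" using hp a_def b_def by auto
  have fin: "finite J" using J finite_subset by blast
  have t: "((if a = snd (c!j) then 1 else 0) - (if a = fst (c!(Suc j mod ?n)) then 1 else 0))
     + ((if b = snd (c!j) then 1 else 0) - (if b = fst (c!(Suc j mod ?n)) then 1 else 0)) = (0::rat)"
    if j: "j \<in> J" for j
  proof -
    have jn: "j < ?n" using j J by auto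
    let ?ej = "{snd (c!j), fst (c!(Suc j mod ?n))}"
    have ej: "?ej \<in> edges F" by (rule cw_edge[OF W jn])
    have ne: "snd (c!j) \<noteq> fst (c!(Suc j mod ?n))" by (rule pair_edge_ne[OF G ej])
    show ?thesis
    proof (cases "?ej = e")
      case True
      hence "(snd (c!j) = a \<and> fst (c!(Suc j mod ?n)) = b) \<or> (snd (c!j) = b \<and> fst (c!(Suc j mod ?n)) = a)"
        using ab(2) by (metis doubleton_eq_iff)
      thus ?thesis using ab(1) ne by auto
    next
      case False
      have "a \<notin> ?ej" using g_disj[OF G ej e, of a] False ab by auto
      moreover have "b \<notin> ?ej" using g_disj[OF G ej e, of b] False ab by auto
      ultimately show ?thesis by auto
    qed
  qed
  have "gJ c J a + gJ c J b = (\<Sum>j\<in>J. ((if a = snd (c!j) then 1 else 0) - (if a = fst (c!(Suc j mod ?n)) then 1 else 0))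
     + ((if b = snd (c!j) then 1 else 0) - (if b = fst (c!(Suc j mod ?n)) then 1 else 0)))"
    unfolding gJ_def by (rule sum.distrib[symmetric])
  also have "\<dots> = 0" using t by simp
  finally show "gJ c J (tail e) + gJ c J (head tail e) = 0" using a_def b_def by simp
qed

lemma gJ_E:
  assumes W: "closed_walk F c" and J: "J \<subseteq> {..<length c}"
    and NE: "\<forall>j\<in>J. {snd (c!j), fst (c!(Suc j mod length c))} \<notin> E"
    and e: "e \<in> E" and h: "h \<in> e"
  shows "gJ c J h = 0"
  unfolding gJ_def
proof (rule sum.neutral, rule ballI)
  fix j assume j: "j \<in> J"
  let ?n = "length c"
  have jn: "j < ?n" using j J by auto
  let ?ej = "{snd (c!j), fst (c!(Suc j mod ?n))}"
  have ej: "?ej \<in> edges F" by (rule cw_edge[OF W jn])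
  have eF: "e \<in> edges F" using e ES by auto
  have "h \<notin> ?ej"
  proof
    assume "h \<in> ?ej"
    hence "?ej = e" using g_disj[OF G ej eF _ h] by simp
    thus False using NE j e by auto
  qed
  thus "(if h = snd (c!j) then 1 else 0) - (if h = fst (c!(Suc j mod ?n)) then 1 else 0) = (0::rat)" by auto
qed

lemma gJ_snd:
  assumes D: "distinct (walk_halfs c)" and J: "J \<subseteq> {..<length c}" and m: "m < length c"
  shows "gJ c J (snd (c!m)) = (if m \<in> J then 1 else 0)"
proof -
  let ?n = "length c"
  have t: "(if snd (c!m) = snd (c!j) then 1 else 0) - (if snd (c!m) = fst (c!(Suc j mod ?n)) then 1 else 0)
      = (if j = m then 1 else (0::rat))" if j: "j \<in> J" for j
  proof -
    have jn: "j < ?n" using j J by auto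
    have sj: "Suc j mod ?n < ?n" using jn by (intro mod_less_divisor) auto
    have "snd (c!m) \<noteq> fst (c!(Suc j mod ?n))" using DW(3)[OF D sj m] by metis
    moreover have "(snd (c!m) = snd (c!j)) = (j = m)" using DW(2)[OF D m jn] by auto
    ultimately show ?thesis by simp
  qed
  have "gJ c J (snd (c!m)) = (\<Sum>j\<in>J. if j = m then 1 else (0::rat))"
    unfolding gJ_def by (rule sum.cong[OF refl]) (use t in blast)
  also have "\<dots> = (if m \<in> J then 1 else 0)"
    using J finite_subset[OF J] by simp
  finally show ?thesis .
qed

lemma gJ_fst:
  assumes D: "distinct (walk_halfs c)" and J: "J \<subseteq> {..<length c}" and m: "m < length c"
  shows "gJ c J (fst (c!m)) = - (if (m + length c - 1) mod length c \<in> J then 1 else 0)"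
proof -
  let ?n = "length c"
  let ?pm = "(m + ?n - 1) mod ?n"
  have t: "(if fst (c!m) = snd (c!j) then 1 else 0) - (if fst (c!m) = fst (c!(Suc j mod ?n)) then 1 else 0)
      = - (if j = ?pm then 1 else (0::rat))" if j: "j \<in> J" for j
  proof -
    have jn: "j < ?n" using j J by auto
    have sj: "Suc j mod ?n < ?n" using jn by (intro mod_less_divisor) auto
    have "fst (c!m) \<noteq> snd (c!j)" using DW(3)[OF D m jn] by metis
    moreover have "(fst (c!m) = fst (c!(Suc j mod ?n))) = (Suc j mod ?n = m)" using DW(1)[OF D m sj] by auto
    moreover have "(Suc j mod ?n = m) = (j = ?pm)" by (rule suc_mod_iff[OF jn m])
    ultimately show ?thesis by simp
  qed
  have "gJ c J (fst (c!m)) = (\<Sum>j\<in>J. - (if j = ?pm then 1 else (0::rat)))"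
    unfolding gJ_def by (rule sum.cong[OF refl]) (use t in blast)
  also have "\<dots> = - (\<Sum>j\<in>J. (if j = ?pm then 1 else (0::rat)))" by (simp add: sum_negf)
  also have "\<dots> = - (if ?pm \<in> J then 1 else 0)"
    using J finite_subset[OF J] by simp
  finally show ?thesis .
qed

lemma gJ_supp:
  assumes "gJ c J h \<noteq> 0"
  shows "\<exists>j\<in>J. h = snd (c!j) \<or> h = fst (c!(Suc j mod length c))"
proof (rule ccontr)
  assume "\<not> ?thesis"
  hence "gJ c J h = 0" unfolding gJ_def by (intro sum.neutral) auto
  thus False using assms by simp
qed

end

context thm9
begin

lemma posinj:
  assumes D: "distinct (walk_halfs c)" and m: "m < length c" and p: "p < length c"
  shows "({fst (c!m), snd (c!m)} = {fst (c!p), snd (c!p)}) = (m = p)"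
proof
  assume "{fst (c!m), snd (c!m)} = {fst (c!p), snd (c!p)}"
  hence "fst (c!m) = fst (c!p) \<or> fst (c!m) = snd (c!p)" by blast
  thus "m = p" using DW(1)[OF D m p] DW(3)[OF D m p] by blast
qed simp

lemma ARC:
  assumes C: "C \<in> P" and s: "s \<in> C" and s': "s' \<in> C" and ne: "s \<noteq> s'"
  shows "\<exists>g. antisym_g F tail g \<and> (\<forall>e\<in>E. \<forall>h\<in>e. g h = 0) \<and>
     (\<forall>x\<in>\<Union>P. (\<Sum>h\<in>x. g h) = (if x = s then 1 else 0) - (if x = s' then 1 else 0))"
proof -
  obtain c where c: "circuit_walk F c" "trans_set c = C" using circ_walk[OF C] by blast
  have W: "closed_walk F c" and D: "distinct (walk_halfs c)" and cne: "c \<noteq> []"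
    using c(1) unfolding circuit_walk_def by auto
  define n where "n = length c"
  have n0: "0 < n" using cne n_def by simp
  have "\<exists>p<length c. s = {fst (c!p), snd (c!p)}" using ts_nth[of s c] s c(2) by simp
  then obtain p where p: "p < n" "s = {fst (c!p), snd (c!p)}" using n_def by blast
  have "\<exists>q<length c. s' = {fst (c!q), snd (c!q)}" using ts_nth[of s' c] s' c(2) by simp
  then obtain q where q: "q < n" "s' = {fst (c!q), snd (c!q)}" using n_def by blast
  have pq: "p \<noteq> q" using ne p q by auto
  define d where "d k = (k + n - p) mod n" for k
  define pr where "pr m = (m + n - 1) mod n" for m
  define Jf where "Jf = {j. j < n \<and> d j < d q}"
  define Jb where "Jb = {..<n} - Jf"
  have Jf_sub: "Jf \<subseteq> {..<length c}" unfolding Jf_def n_def by auto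
  have Jb_sub: "Jb \<subseteq> {..<length c}" unfolding Jb_def n_def by auto
  have prn: "pr m < n" if "m < n" for m using that pr_def prform[OF that] by auto
  have key: "(if m \<in> Jf then 1 else 0) - (if pr m \<in> Jf then 1 else 0) = (if m = p then 1 else 0) - (if m = q then (1::rat) else 0)"
    if m: "m < n" for m
  proof -
    have dpm: "d (pr m) = (if d m = 0 then n - 1 else d m - 1)" using dpr[OF m p(1)] d_def pr_def by simp
    have a0: "(d m = 0) = (m = p)" using dzero[OF m p(1)] d_def by simp
    have ab: "(d m = d q) = (m = q)" using dinj[OF m q(1) p(1)] d_def by simp
    have bpos: "d q \<noteq> 0" using dzero[OF q(1) p(1)] d_def pq by simp
    have bn: "d q < n" using d_def n0 by simp
    have i1: "(m \<in> Jf) = (d m < d q)" using m Jf_def by simp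
    have i2: "(pr m \<in> Jf) = (d (pr m) < d q)" using prn[OF m] Jf_def by simp
    show ?thesis unfolding i1 i2 dpm using a0 ab bpos bn by auto
  qed
  have keyb: "- ((if m \<in> Jb then 1 else 0) - (if pr m \<in> Jb then 1 else 0)) = (if m = p then 1 else 0) - (if m = q then (1::rat) else 0)"
    if m: "m < n" for m
  proof -
    have e1: "(if m \<in> Jb then 1 else (0::rat)) = 1 - (if m \<in> Jf then 1 else 0)" using m Jb_def by auto
    have e2: "(if pr m \<in> Jb then 1 else (0::rat)) = 1 - (if pr m \<in> Jf then 1 else 0)" using prn[OF m] Jb_def by auto
    have ar: "- ((1 - x) - (1 - y)) = x - (y::rat)" for x y by simp
    show ?thesis unfolding e1 e2 ar by (rule key[OF m])
  qed
  have sum_in: "(\<Sum>h\<in>{fst (c!m), snd (c!m)}. gJ c J h) = (if m \<in> J then 1 else 0) - (if pr m \<in> J then 1 else 0)"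
    if J: "J \<subseteq> {..<length c}" and m: "m < n" for J m
  proof -
    have mn: "m < length c" using m n_def by simp
    have ne2: "fst (c!m) \<noteq> snd (c!m)" using cw_halfs[OF W mn] by simp
    have "(\<Sum>h\<in>{fst (c!m), snd (c!m)}. gJ c J h) = gJ c J (fst (c!m)) + gJ c J (snd (c!m))"
      using ne2 by simp
    thus ?thesis using gJ_fst[OF D J mn] gJ_snd[OF D J mn] pr_def n_def by simp
  qed
  have sum_out: "(\<Sum>h\<in>x. gJ c J h) = 0" if J: "J \<subseteq> {..<length c}" and x: "x \<in> \<Union>P" "x \<notin> C" for J x
  proof (rule sum.neutral, rule ballI)
    fix h assume h: "h \<in> x"
    obtain C'' where C'': "C'' \<in> P" "x \<in> C''" using x(1) by blast
    show "gJ c J h = 0"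
    proof (rule ccontr)
      assume "gJ c J h \<noteq> 0"
      then obtain j where j: "j \<in> J" "h = snd (c!j) \<or> h = fst (c!(Suc j mod length c))" using gJ_supp by blast
      have jn: "j < length c" using j(1) J by auto
      have sjn: "Suc j mod length c < length c" using jn by (intro mod_less_divisor) auto
      obtain k where k: "k < length c" "h \<in> {fst (c!k), snd (c!k)}"
        using j(2) jn sjn by blast
      have yC: "{fst (c!k), snd (c!k)} \<in> C" using ts_nth[of _ c] c(2) k(1) by auto
      have "{fst (c!k), snd (c!k)} = x" using U1[OF yC C C''(2) C''(1) k(2) h] by simp
      thus False using yC x(2) by simp
    qed
  qed
  have fin: "finite (walk_edges c \<inter> E)"
  proof -
    have "walk_edges c \<inter> E \<subseteq> edges F" using ES by blast
    thus ?thesis by (rule finite_subset[OF _ g_fin_edges[OF G]])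
  qed
  have "\<forall>w. circuit_walk F w \<and> trans_set w = C \<longrightarrow> card (walk_edges w \<inter> E) \<le> 1" using EC C by blast
  hence card1: "card (walk_edges c \<inter> E) \<le> 1" using c by blast
  have edmem: "{snd (c!j), fst (c!(Suc j mod length c))} \<in> walk_edges c" if "j < length c" for j
    unfolding walk_edges_def using that by blast
  have choice: "(\<forall>j\<in>Jf. {snd (c!j), fst (c!(Suc j mod length c))} \<notin> E) \<or> (\<forall>j\<in>Jb. {snd (c!j), fst (c!(Suc j mod length c))} \<notin> E)"
  proof (rule ccontr)
    assume "\<not> ?thesis"
    then obtain j1 j2 where j: "j1 \<in> Jf" "{snd (c!j1), fst (c!(Suc j1 mod length c))} \<in> E"
      "j2 \<in> Jb" "{snd (c!j2), fst (c!(Suc j2 mod length c))} \<in> E" by blast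
    have jn: "j1 < length c" "j2 < length c" using j(1,3) Jf_sub Jb_sub by auto
    have "j1 \<noteq> j2" using j(1,3) Jb_def by auto
    hence ne: "{snd (c!j1), fst (c!(Suc j1 mod length c))} \<noteq> {snd (c!j2), fst (c!(Suc j2 mod length c))}"
      using walk_edge_inj[OF D jn] by blast
    have "{{snd (c!j1), fst (c!(Suc j1 mod length c))}, {snd (c!j2), fst (c!(Suc j2 mod length c))}} \<subseteq> walk_edges c \<inter> E"
      using j(2,4) edmem jn by blast
    hence "card {{snd (c!j1), fst (c!(Suc j1 mod length c))}, {snd (c!j2), fst (c!(Suc j2 mod length c))}} \<le> card (walk_edges c \<inter> E)"
      by (rule card_mono[OF fin])
    thus False using ne card1 by simp
  qed
  have xin: "\<exists>m<n. x = {fst (c!m), snd (c!m)}" if "x \<in> C" for x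
    using ts_nth[of x c] that c(2) n_def by simp
  have xs: "(x = s) = (m = p)" "(x = s') = (m = q)" if "m < n" "x = {fst (c!m), snd (c!m)}" for x m
    using posinj[OF D, of m p] posinj[OF D, of m q] that p q n_def by auto
  from choice show ?thesis
  proof
    assume c1: "\<forall>j\<in>Jf. {snd (c!j), fst (c!(Suc j mod length c))} \<notin> E"
    show ?thesis
    proof (intro exI[of _ "gJ c Jf"] conjI ballI)
      show "antisym_g F tail (gJ c Jf)" by (rule gJ_antisym[OF W Jf_sub])
    next
      fix e h assume "e \<in> E" "h \<in> e"
      thus "gJ c Jf h = 0" by (rule gJ_E[OF W Jf_sub c1])
    next
      fix x assume x: "x \<in> \<Union>P"
      show "(\<Sum>h\<in>x. gJ c Jf h) = (if x = s then 1 else 0) - (if x = s' then 1 else 0)"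
      proof (cases "x \<in> C")
        case True
        then obtain m where m: "m < n" "x = {fst (c!m), snd (c!m)}" using xin by blast
        show ?thesis unfolding m(2) sum_in[OF Jf_sub m(1)] key[OF m(1)] using xs[OF m] m(2) by simp
      next
        case False
        hence "x \<noteq> s" "x \<noteq> s'" using s s' by auto
        thus ?thesis using sum_out[OF Jf_sub x False] by simp
      qed
    qed
  next
    assume c2: "\<forall>j\<in>Jb. {snd (c!j), fst (c!(Suc j mod length c))} \<notin> E"
    show ?thesis
    proof (intro exI[of _ "\<lambda>h. - gJ c Jb h"] conjI ballI)
      have "antisym_g F tail (gJ c Jb)" by (rule gJ_antisym[OF W Jb_sub])
      hence A: "\<forall>e\<in>edges F. gJ c Jb (tail e) + gJ c Jb (head tail e) = 0" unfolding antisym_g_def .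
      have ar: "- x + - y = - (x + y)" for x y :: rat by simp
      show "antisym_g F tail (\<lambda>h. - gJ c Jb h)" unfolding antisym_g_def ar using A by simp
    next
      fix e h assume "e \<in> E" "h \<in> e"
      thus "- gJ c Jb h = 0" using gJ_E[OF W Jb_sub c2] by simp
    next
      fix x assume x: "x \<in> \<Union>P"
      show "(\<Sum>h\<in>x. - gJ c Jb h) = (if x = s then 1 else 0) - (if x = s' then 1 else 0)"
      proof (cases "x \<in> C")
        case True
        then obtain m where m: "m < n" "x = {fst (c!m), snd (c!m)}" using xin by blast
        have "(\<Sum>h\<in>x. - gJ c Jb h) = - (\<Sum>h\<in>x. gJ c Jb h)" by (simp add: sum_negf)
        thus ?thesis unfolding m(2) sum_in[OF Jb_sub m(1)] using keyb[OF m(1)] xs[OF m] m(2) by simp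
      next
        case False
        hence "x \<noteq> s" "x \<noteq> s'" using s s' by auto
        moreover have "(\<Sum>h\<in>x. - gJ c Jb h) = - (\<Sum>h\<in>x. gJ c Jb h)" by (simp add: sum_negf)
        ultimately show ?thesis using sum_out[OF Jb_sub x False] by simp
      qed
    qed
  qed
qed

end

lemma del_graph:
  assumes G: "is_graph F" and ES: "E \<subseteq> edges F"
  shows "is_graph (del_edges F E)"
proof -
  have e: "edges (del_edges F E) = edges F - E" "halfs (del_edges F E) = halfs F - \<Union>E"
    "inc (del_edges F E) = inc F" "verts (del_edges F E) = verts F" by (simp_all add: del_edges_def)
  have U: "\<Union>(edges F - E) = halfs F - \<Union>E"
  proof
    show "\<Union>(edges F - E) \<subseteq> halfs F - \<Union>E"
    proof
      fix h assume "h \<in> \<Union>(edges F - E)"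
      then obtain e where he: "e \<in> edges F" "e \<notin> E" "h \<in> e" by blast
      have "h \<in> halfs F" using g_sub[OF G he(1)] he(3) by blast
      moreover have "h \<notin> \<Union>E"
      proof
        assume "h \<in> \<Union>E"
        then obtain e' where "e' \<in> E" "h \<in> e'" by blast
        hence "e' = e" using g_disj[OF G _ he(1)] ES he(3) by blast
        thus False using \<open>e' \<in> E\<close> he(2) by simp
      qed
      ultimately show "h \<in> halfs F - \<Union>E" by simp
    qed
  next
    show "halfs F - \<Union>E \<subseteq> \<Union>(edges F - E)"
    proof
      fix h assume h: "h \<in> halfs F - \<Union>E"
      then obtain e where "e \<in> edges F" "h \<in> e" using g_half[OF G] by blast
      thus "h \<in> \<Union>(edges F - E)" using h by blast
    qed
  qed
  show ?thesis unfolding is_graph_def e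
  proof (intro conjI)
    show "finite (verts F)" using isgD(6)[OF G] .
    show "finite (halfs F - \<Union>E)" using isgD(1)[OF G] by simp
    show "\<forall>e\<in>edges F - E. \<exists>a b. a \<noteq> b \<and> e = {a, b}" using isgD(2)[OF G] by blast
    show "\<Union>(edges F - E) = halfs F - \<Union>E" by (rule U)
    show "\<forall>e\<in>edges F - E. \<forall>e'\<in>edges F - E. e \<noteq> e' \<longrightarrow> e \<inter> e' = {}" using isgD(4)[OF G] by blast
    show "inc F ` (halfs F - \<Union>E) \<subseteq> verts F" using isgD(5)[OF G] by blast
  qed
qed

lemma LIN:
  fixes z :: "'e \<Rightarrow> rat" and Dl :: "'e \<Rightarrow> 't \<Rightarrow> rat"
  assumes z: "z = (\<lambda>e. \<Sum>x\<in>TT. cc x * x e)"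
    and H: "\<forall>x\<in>TT. (\<Sum>t\<in>X. a t * (\<Sum>e\<in>EF. x e * Dl e t)) = 0"
  shows "(\<Sum>t\<in>X. a t * (\<Sum>e\<in>EF. z e * Dl e t)) = 0"
proof -
  have "(\<Sum>t\<in>X. a t * (\<Sum>e\<in>EF. z e * Dl e t)) = (\<Sum>t\<in>X. a t * (\<Sum>e\<in>EF. \<Sum>x\<in>TT. cc x * (x e * Dl e t)))"
    unfolding z by (simp add: sum_distrib_right mult.assoc)
  also have "\<dots> = (\<Sum>t\<in>X. a t * (\<Sum>x\<in>TT. cc x * (\<Sum>e\<in>EF. x e * Dl e t)))"
    by (simp add: sum.swap[of _ EF] sum_distrib_left)
  also have "\<dots> = (\<Sum>t\<in>X. \<Sum>x\<in>TT. cc x * (a t * (\<Sum>e\<in>EF. x e * Dl e t)))"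
    by (simp add: sum_distrib_left mult.left_commute)
  also have "\<dots> = (\<Sum>x\<in>TT. cc x * (\<Sum>t\<in>X. a t * (\<Sum>e\<in>EF. x e * Dl e t)))"
    by (simp add: sum.swap[of _ X] sum_distrib_left)
  also have "\<dots> = 0" using H by simp
  finally show ?thesis .
qed

context thm9
begin

lemma Hv_split:
  assumes v: "Hv v \<noteq> {}"
  shows "\<exists>t\<in>\<tau>. \<exists>s1 s2. t = {s1,s2} \<and> s1 \<noteq> s2 \<and> Hv v = s1 \<union> s2 \<and> s1 \<inter> s2 = {} \<and> s1 \<in> \<Union>P \<and> s2 \<in> \<Union>P"
proof -
  obtain h0 where h0: "h0 \<in> Hv v" using v by blast
  have h0': "h0 \<in> halfs F" "inc F h0 = v" using h0 unfolding Hv_def by auto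
  obtain C0 s0 where C0: "C0 \<in> P" "s0 \<in> C0" "h0 \<in> s0" using cover[OF h0'(1)] by blast
  have s0P: "s0 \<in> \<Union>P" using C0 by blast
  obtain t where t: "t \<in> \<tau>" "s0 \<in> t" using T3[OF s0P] by blast
  obtain v' where v': "t = {s0, Hv v' - s0}" "s0 \<subseteq> Hv v'" "s0 \<noteq> {}" "s0 \<in> \<Union>P" "Hv v' - s0 \<in> \<Union>P" "s0 \<noteq> Hv v' - s0"
    using T1'[OF t] by blast
  have e: "v' = v" using v'(2) C0(3) h0'(2) unfolding Hv_def by auto
  have A: "t = {s0, Hv v - s0}" using v'(1) e by simp
  have B: "s0 \<noteq> Hv v - s0" using v'(6) e by simp
  have Cc: "Hv v = s0 \<union> (Hv v - s0)" using v'(2) e by blast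
  have Dd: "s0 \<inter> (Hv v - s0) = {}" by blast
  have Ee: "Hv v - s0 \<in> \<Union>P" using v'(5) e by simp
  have conj: "t = {s0, Hv v - s0} \<and> s0 \<noteq> Hv v - s0 \<and> Hv v = s0 \<union> (Hv v - s0) \<and> s0 \<inter> (Hv v - s0) = {} \<and> s0 \<in> \<Union>P \<and> Hv v - s0 \<in> \<Union>P"
    using A B Cc Dd Ee s0P by blast
  show ?thesis using conj t(1) by (intro bexI[of _ t] exI[of _ s0] exI[of _ "Hv v - s0"]) simp_all
qed

end

context thm9
begin

lemma edT: "edges T = \<tau>" by (simp add: touch_graph_def)
lemma halfsT: "halfs T = \<Union>P" by (simp add: touch_graph_def)

lemma TW:
  assumes w: "circuit_walk T w" and i: "i < length w"
  shows "fst (w!i) \<in> \<Union>P" "snd (w!i) \<in> \<Union>P" "fst (w!i) \<noteq> snd (w!i)"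
    "inc T (fst (w!i)) \<in> P" "fst (w!i) \<in> inc T (fst (w!i))" "snd (w!i) \<in> inc T (fst (w!i))"
    "{snd (w!i), fst (w!(Suc i mod length w))} \<in> \<tau>"
proof -
  have W: "closed_walk T w" using w unfolding circuit_walk_def by simp
  note h = cw_halfs[OF W i]
  show a: "fst (w!i) \<in> \<Union>P" "snd (w!i) \<in> \<Union>P" "fst (w!i) \<noteq> snd (w!i)" using h halfsT by auto
  show "inc T (fst (w!i)) \<in> P" "fst (w!i) \<in> inc T (fst (w!i))" using incT'[OF a(1)] by auto
  show "snd (w!i) \<in> inc T (fst (w!i))" using incT'[OF a(2)] h(4) by simp
  show "{snd (w!i), fst (w!(Suc i mod length w))} \<in> \<tau>" using cw_edge[OF W i] edT by simp
qed

lemma FLOW: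
  assumes w: "circuit_walk T w"
  shows "\<exists>g. antisym_g F tail g \<and> (\<forall>e\<in>E. \<forall>h\<in>e. g h = 0) \<and> (\<forall>v. (\<Sum>h\<in>Hv v. g h) = 0) \<and>
    (\<forall>x\<in>\<Union>P. (\<Sum>h\<in>x. g h) = (\<Sum>i<length w. (if x = fst (w!i) then 1 else 0) - (if x = snd (w!i) then 1 else 0)))"
proof -
  define k where "k = length w"
  define Q where "Q i g \<longleftrightarrow> antisym_g F tail g \<and> (\<forall>e\<in>E. \<forall>h\<in>e. g h = 0) \<and>
     (\<forall>x\<in>\<Union>P. (\<Sum>h\<in>x. g h) = (if x = fst (w!i) then 1 else 0) - (if x = snd (w!i) then 1 else 0))" for i g
  have ex: "\<forall>i. \<exists>g. i < k \<longrightarrow> Q i g"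
  proof
    fix i
    show "\<exists>g. i < k \<longrightarrow> Q i g"
    proof (cases "i < k")
      case True
      hence i: "i < length w" using k_def by simp
      have "\<exists>g. Q i g" unfolding Q_def
        by (rule ARC[OF TW(4)[OF w i] TW(5)[OF w i] TW(6)[OF w i] TW(3)[OF w i]])
      thus ?thesis by blast
    qed simp
  qed
  obtain gg where gg: "\<forall>i. i < k \<longrightarrow> Q i (gg i)" using choice[OF ex] by blast
  define g where "g h = (\<Sum>i<k. gg i h)" for h
  have gA: "antisym_g F tail g" unfolding antisym_g_def
  proof
    fix e assume e: "e \<in> edges F"
    have "g (tail e) + g (head tail e) = (\<Sum>i<k. gg i (tail e) + gg i (head tail e))"
      unfolding g_def by (simp add: sum.distrib)
    also have "\<dots> = 0"
    proof (rule sum.neutral, rule ballI)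
      fix i assume "i \<in> {..<k}"
      hence "antisym_g F tail (gg i)" using gg Q_def by auto
      thus "gg i (tail e) + gg i (head tail e) = 0" using e unfolding antisym_g_def by blast
    qed
    finally show "g (tail e) + g (head tail e) = 0" .
  qed
  have gE: "\<forall>e\<in>E. \<forall>h\<in>e. g h = 0"
  proof (intro ballI)
    fix e h assume "e \<in> E" "h \<in> e"
    thus "g h = 0" unfolding g_def using gg Q_def by (intro sum.neutral) auto
  qed
  have gS: "(\<Sum>h\<in>x. g h) = (\<Sum>i<k. (if x = fst (w!i) then 1 else 0) - (if x = snd (w!i) then 1 else 0))"
    if x: "x \<in> \<Union>P" for x
  proof -
    have "(\<Sum>h\<in>x. g h) = (\<Sum>i<k. \<Sum>h\<in>x. gg i h)" unfolding g_def by (rule sum.swap)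
    also have "\<dots> = (\<Sum>i<k. (if x = fst (w!i) then 1 else 0) - (if x = snd (w!i) then 1 else 0))"
    proof (rule sum.cong[OF refl])
      fix i assume "i \<in> {..<k}"
      hence "Q i (gg i)" using gg by auto
      thus "(\<Sum>h\<in>x. gg i h) = (if x = fst (w!i) then 1 else 0) - (if x = snd (w!i) then 1 else 0)"
        using x unfolding Q_def by blast
    qed
    finally show ?thesis .
  qed
  have W: "closed_walk T w" using w unfolding circuit_walk_def by simp
  have gV: "(\<Sum>h\<in>Hv v. g h) = 0" for v
  proof (cases "Hv v = {}")
    case True thus ?thesis by simp
  next
    case False
    from Hv_split[OF False] obtain t where t1: "t \<in> \<tau>"
      and t2: "\<exists>s1 s2. t = {s1,s2} \<and> s1 \<noteq> s2 \<and> Hv v = s1 \<union> s2 \<and> s1 \<inter> s2 = {} \<and> s1 \<in> \<Union>P \<and> s2 \<in> \<Union>P" ..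
    from t2 obtain s1 where "\<exists>s2. t = {s1,s2} \<and> s1 \<noteq> s2 \<and> Hv v = s1 \<union> s2 \<and> s1 \<inter> s2 = {} \<and> s1 \<in> \<Union>P \<and> s2 \<in> \<Union>P" ..
    then obtain s2 where t3: "t = {s1,s2} \<and> s1 \<noteq> s2 \<and> Hv v = s1 \<union> s2 \<and> s1 \<inter> s2 = {} \<and> s1 \<in> \<Union>P \<and> s2 \<in> \<Union>P" ..
    have t: "t \<in> \<tau>" "t = {s1,s2}" "s1 \<noteq> s2" "Hv v = s1 \<union> s2" "s1 \<inter> s2 = {}" "s1 \<in> \<Union>P" "s2 \<in> \<Union>P"
      using t1 t3 by simp_all
    have f12: "finite s1" "finite s2" using Hv_fin[of v] t(4) by (auto intro: finite_subset)
    have "(\<Sum>h\<in>Hv v. g h) = (\<Sum>h\<in>s1. g h) + (\<Sum>h\<in>s2. g h)"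
      unfolding t(4) by (rule sum.union_disjoint[OF f12 t(5)])
    also have "\<dots> = (\<Sum>i<k. ((if s1 = fst (w!i) then 1 else 0) - (if s1 = snd (w!i) then 1 else 0))
       + ((if s2 = fst (w!i) then 1 else 0) - (if s2 = snd (w!i) then 1 else 0)))"
      unfolding gS[OF t(6)] gS[OF t(7)] by (rule sum.distrib[symmetric])
    also have "\<dots> = (\<Sum>i<k. (if fst (w!i) \<in> t then 1 else 0) - (if snd (w!i) \<in> t then 1 else (0::rat)))"
      by (rule sum.cong[OF refl]) (use t(2,3) in auto)
    also have "\<dots> = (\<Sum>i<k. (if fst (w!i) \<in> t then 1 else 0)) - (\<Sum>i<k. if snd (w!i) \<in> t then 1 else (0::rat))"
      by (rule sum_subtractf)
    also have "(\<Sum>i<k. if snd (w!i) \<in> t then 1 else (0::rat)) = (\<Sum>i<k. if fst (w!(Suc i mod k)) \<in> t then 1 else 0)"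
    proof (rule sum.cong[OF refl])
      fix i assume "i \<in> {..<k}"
      hence i: "i < length w" using k_def by simp
      have ei: "{snd (w!i), fst (w!(Suc i mod length w))} \<in> \<tau>" by (rule TW(7)[OF w i])
      have "(snd (w!i) \<in> t) = (fst (w!(Suc i mod k)) \<in> t)"
      proof
        assume "snd (w!i) \<in> t"
        hence "t = {snd (w!i), fst (w!(Suc i mod length w))}" using T2[OF t(1) ei] by simp
        thus "fst (w!(Suc i mod k)) \<in> t" using k_def by simp
      next
        assume "fst (w!(Suc i mod k)) \<in> t"
        hence "t = {snd (w!i), fst (w!(Suc i mod length w))}" using T2[OF t(1) ei] k_def by simp
        thus "snd (w!i) \<in> t" by simp
      qed
      thus "(if snd (w!i) \<in> t then 1 else (0::rat)) = (if fst (w!(Suc i mod k)) \<in> t then 1 else 0)" by simp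
    qed
    also have "\<dots> = (\<Sum>i<k. if fst (w!i) \<in> t then 1 else 0)"
      by (rule sum_rot[where f = "\<lambda>j. if fst (w!j) \<in> t then 1 else (0::rat)"])
    finally show ?thesis by simp
  qed
  show ?thesis
    by (intro exI[of _ g] conjI allI ballI) (use gA gE gV gS k_def in auto)
qed

end

context thm9
begin

lemma ori_in: "t \<in> \<tau> \<Longrightarrow> ori t \<in> t"
  using TO unfolding transitional_orientation_def tau_def by blast

lemma ori_P: "t \<in> \<tau> \<Longrightarrow> ori t \<in> \<Union>P"
  using ori_in unfolding tau_def by blast

lemma ori_sub: "t \<in> \<tau> \<Longrightarrow> ori t \<subseteq> halfs F"
  using ori_P ST_sub by blast

lemma ZC:
  assumes gA: "antisym_g F tail g" and gE: "\<forall>e\<in>E. \<forall>h\<in>e. g h = 0" and gV: "\<forall>v. (\<Sum>h\<in>Hv v. g h) = 0"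
  shows "(\<lambda>e. if e \<in> edges F \<and> e \<notin> E then g (tail e) else 0) \<in> cycle_space (del_edges F E) tail"
proof -
  let ?F' = "del_edges F E"
  let ?z = "\<lambda>e. if e \<in> edges F \<and> e \<notin> E then g (tail e) else 0"
  have e: "edges ?F' = edges F - E" "halfs ?F' = halfs F - \<Union>E"
    "inc ?F' = inc F" "verts ?F' = verts F" by (simp_all add: del_edges_def)
  have GF: "is_graph ?F'" by (rule del_graph[OF G ES])
  have DF: "directed_version ?F' tail" using DV unfolding directed_version_def e by simp
  have gA': "antisym_g ?F' tail g" using gA unfolding antisym_g_def e by simp
  have inc_eq: "incidence ?F' tail = incidence F tail" unfolding incidence_def[abs_def] e by simp
  show ?thesis unfolding cycle_space_def
  proof (intro CollectI conjI allI impI ballI)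
    fix e assume "e \<notin> edges ?F'"
    thus "?z e = 0" using e by auto
  next
    fix v assume "v \<in> verts ?F'"
    have "(\<Sum>e\<in>edges ?F'. incidence ?F' tail v e * ?z e) = (\<Sum>e\<in>edges ?F'. incidence ?F' tail v e * g (tail e))"
      by (rule sum.cong[OF refl]) (use e in auto)
    also have "\<dots> = (\<Sum>h\<in>{h\<in>halfs ?F'. inc ?F' h = v}. g h)" by (rule GL1[OF GF DF gA'])
    also have "\<dots> = (\<Sum>h\<in>Hv v. g h)"
    proof (rule sum.mono_neutral_left[OF Hv_fin])
      show "{h\<in>halfs ?F'. inc ?F' h = v} \<subseteq> Hv v" unfolding Hv_def e by auto
      show "\<forall>i\<in>Hv v - {h\<in>halfs ?F'. inc ?F' h = v}. g i = 0"
      proof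
        fix h assume "h \<in> Hv v - {h\<in>halfs ?F'. inc ?F' h = v}"
        hence "h \<in> \<Union>E" unfolding Hv_def e by auto
        thus "g h = 0" using gE by blast
      qed
    qed
    also have "\<dots> = 0" using gV by simp
    finally show "(\<Sum>e\<in>edges ?F'. incidence ?F' tail v e * ?z e) = 0" .
  qed
qed

lemma MZ:
  assumes gA: "antisym_g F tail g" and gE: "\<forall>e\<in>E. \<forall>h\<in>e. g h = 0" and t: "t \<in> \<tau>"
  shows "(\<Sum>e\<in>edges F. (if e \<in> edges F \<and> e \<notin> E then g (tail e) else 0) * Delta tail ori e t) = (\<Sum>h\<in>ori t. g h)"
proof -
  have "(\<Sum>e\<in>edges F. (if e \<in> edges F \<and> e \<notin> E then g (tail e) else 0) * Delta tail ori e t)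
      = (\<Sum>e\<in>edges F. g (tail e) * Delta tail ori e t)"
  proof (rule sum.cong[OF refl])
    fix e assume e: "e \<in> edges F"
    have "e \<in> E \<Longrightarrow> g (tail e) = 0" using gE DV e unfolding directed_version_def by blast
    thus "(if e \<in> edges F \<and> e \<notin> E then g (tail e) else 0) * Delta tail ori e t = g (tail e) * Delta tail ori e t"
      using e by auto
  qed
  also have "\<dots> = (\<Sum>h\<in>halfs F. if h \<in> ori t then g h else 0)" by (rule GL2[OF G DV gA])
  also have "\<dots> = (\<Sum>h\<in>halfs F \<inter> ori t. g h)" using g_fin_halfs[OF G] by (simp add: sum.inter_restrict)
  also have "halfs F \<inter> ori t = ori t" using ori_sub[OF t] by blast
  finally show ?thesis .
qed

lemma VAL0:
  assumes w: "circuit_walk T w" and t: "t \<in> \<tau>" and nt: "t \<notin> walk_edges w"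
  shows "(\<Sum>i<length w. (if ori t = fst (w!i) then 1 else 0) - (if ori t = snd (w!i) then 1 else (0::rat))) = 0"
proof (rule sum.neutral, rule ballI)
  fix i assume "i \<in> {..<length w}"
  hence i: "i < length w" by simp
  let ?k = "length w"
  have mem: "{snd (w!j), fst (w!(Suc j mod ?k))} \<in> walk_edges w" if "j < ?k" for j
    unfolding walk_edges_def using that by blast
  have o: "ori t \<in> t" by (rule ori_in[OF t])
  have 1: "ori t \<noteq> snd (w!i)"
  proof
    assume "ori t = snd (w!i)"
    hence "t = {snd (w!i), fst (w!(Suc i mod ?k))}" using T2[OF t TW(7)[OF w i], of "ori t"] o by simp
    thus False using nt mem[OF i] by simp
  qed
  have 2: "ori t \<noteq> fst (w!i)"
  proof
    assume a: "ori t = fst (w!i)"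
    define j where "j = (i + ?k - 1) mod ?k"
    have j: "j < ?k" unfolding j_def by (rule mod_less_divisor) (use i in auto)
    have sj: "Suc j mod ?k = i" using suc_mod_iff[OF j i] j_def by simp
    have "t = {snd (w!j), fst (w!(Suc j mod ?k))}" using T2[OF t TW(7)[OF w j], of "ori t"] o a sj by simp
    thus False using nt mem[OF j] by simp
  qed
  show "(if ori t = fst (w!i) then 1 else 0) - (if ori t = snd (w!i) then 1 else (0::rat)) = 0" using 1 2 by simp
qed

lemma VAL1:
  assumes w: "circuit_walk T w" and t: "t \<in> \<tau>" and it: "t \<in> walk_edges w"
  shows "(\<Sum>i<length w. (if ori t = fst (w!i) then 1 else 0) - (if ori t = snd (w!i) then 1 else (0::rat))) \<noteq> 0"
proof -
  let ?k = "length w"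
  have D: "distinct (walk_halfs w)" using w unfolding circuit_walk_def by simp
  obtain j where j: "j < ?k" "t = {snd (w!j), fst (w!(Suc j mod ?k))}" using it unfolding walk_edges_def by blast
  have sj: "Suc j mod ?k < ?k" using j(1) by (intro mod_less_divisor) auto
  have o: "ori t \<in> t" by (rule ori_in[OF t])
  hence "ori t = snd (w!j) \<or> ori t = fst (w!(Suc j mod ?k))" using j(2) by simp
  thus ?thesis
  proof
    assume a: "ori t = snd (w!j)"
    have "(\<Sum>i<?k. (if ori t = fst (w!i) then 1 else 0) - (if ori t = snd (w!i) then 1 else (0::rat)))
        = (\<Sum>i<?k. - (if i = j then 1 else 0))"
    proof (rule sum.cong[OF refl])
      fix i assume "i \<in> {..<?k}"
      hence i: "i < ?k" by simp
      have "snd (w!j) \<noteq> fst (w!i)" using DW(3)[OF D i j(1)] by metis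
      moreover have "(snd (w!j) = snd (w!i)) = (i = j)" using DW(2)[OF D j(1) i] by auto
      ultimately show "(if ori t = fst (w!i) then 1 else 0) - (if ori t = snd (w!i) then 1 else (0::rat)) = - (if i = j then 1 else 0)"
        using a by simp
    qed
    also have "\<dots> = -1" using j(1) by (simp add: sum_negf)
    finally show ?thesis by simp
  next
    assume a: "ori t = fst (w!(Suc j mod ?k))"
    have "(\<Sum>i<?k. (if ori t = fst (w!i) then 1 else 0) - (if ori t = snd (w!i) then 1 else (0::rat)))
        = (\<Sum>i<?k. (if i = Suc j mod ?k then 1 else 0))"
    proof (rule sum.cong[OF refl])
      fix i assume "i \<in> {..<?k}"
      hence i: "i < ?k" by simp
      have "fst (w!(Suc j mod ?k)) \<noteq> snd (w!i)" using DW(3)[OF D sj i] by metis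
      moreover have "(fst (w!(Suc j mod ?k)) = fst (w!i)) = (i = Suc j mod ?k)" using DW(1)[OF D sj i] by auto
      ultimately show "(if ori t = fst (w!i) then 1 else 0) - (if ori t = snd (w!i) then 1 else (0::rat)) = (if i = Suc j mod ?k then 1 else 0)"
        using a by simp
    qed
    also have "\<dots> = 1" using sj by simp
    finally show ?thesis by simp
  qed
qed

end

context thm9
begin

lemma D1main:
  assumes CI: "cocycle_indep T X"
  shows "col_indep \<Gamma> (edges T) (\<lambda>W t. \<Sum>e\<in>edges F. CM tail W e * Delta tail ori e t) X"
proof -
  have XT: "X \<subseteq> \<tau>" using CI edT unfolding cocycle_indep_def by simp
  obtain B where B: "cm_basis T B" "X \<inter> B = {}" using CI unfolding cocycle_indep_def by blast
  have finX: "finite X" by (rule finite_subset[OF XT fin_tau])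
  have fB: "forest T B" and maxB: "\<forall>Y. forest T Y \<and> B \<subseteq> Y \<longrightarrow> Y = B" using B(1) unfolding cm_basis_def by auto
  have BT: "B \<subseteq> \<tau>" using fB edT unfolding forest_def by simp
  obtain Bs where Bs: "Bs \<subseteq> \<Gamma>" "cycle_basis (del_edges F E) tail Bs" using CS unfolding cycle_spanning_set_def by blast
  have span: "lin_span (sigma_vec tail ` Bs) = cycle_space (del_edges F E) tail" using Bs(2) unfolding cycle_basis_def by blast
  show ?thesis unfolding col_indep_def edT
  proof (intro conjI allI impI ballI)
    show "X \<subseteq> \<tau>" by (rule XT)
    show "finite X" by (rule finX)
  next
    fix a t0
    assume hyp: "\<forall>W\<in>\<Gamma>. (\<Sum>t\<in>X. a t * (\<Sum>e\<in>edges F. CM tail W e * Delta tail ori e t)) = 0" and t0: "t0 \<in> X"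
    show "a t0 = 0"
    proof (rule ccontr)
      assume a0: "a t0 \<noteq> 0"
      have t0B: "t0 \<notin> B" using B(2) t0 by blast
      have t0t: "t0 \<in> \<tau>" using t0 XT by blast
      have "\<not> forest T (insert t0 B)"
      proof
        assume "forest T (insert t0 B)"
        hence "insert t0 B = B" using maxB by blast
        thus False using t0B by blast
      qed
      moreover have "insert t0 B \<subseteq> edges T" using t0t BT edT by simp
      ultimately obtain w where w: "circuit_walk T w" "walk_edges w \<subseteq> insert t0 B" unfolding forest_def by blast
      have t0w: "t0 \<in> walk_edges w"
      proof (rule ccontr)
        assume "t0 \<notin> walk_edges w"
        hence "walk_edges w \<subseteq> B" using w(2) by blast
        thus False using fB w(1) unfolding forest_def by blast
      qed
      obtain g where gA: "antisym_g F tail g" and gE: "\<forall>e\<in>E. \<forall>h\<in>e. g h = 0" and gV: "\<forall>v. (\<Sum>h\<in>Hv v. g h) = 0"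
        and gS: "\<forall>x\<in>\<Union>P. (\<Sum>h\<in>x. g h) = (\<Sum>i<length w. (if x = fst (w!i) then 1 else 0) - (if x = snd (w!i) then 1 else 0))"
        using FLOW[OF w(1)] by blast
      define z where "z e = (if e \<in> edges F \<and> e \<notin> E then g (tail e) else 0)" for e
      define val where "val t = (\<Sum>i<length w. (if ori t = fst (w!i) then 1 else 0) - (if ori t = snd (w!i) then 1 else (0::rat)))" for t
      have zC: "z \<in> cycle_space (del_edges F E) tail" unfolding z_def by (rule ZC[OF gA gE gV])
      have Mz: "(\<Sum>e\<in>edges F. z e * Delta tail ori e t) = val t" if t: "t \<in> \<tau>" for t
      proof -
        have "(\<Sum>e\<in>edges F. z e * Delta tail ori e t) = (\<Sum>h\<in>ori t. g h)" unfolding z_def by (rule MZ[OF gA gE t])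
        also have "\<dots> = val t" unfolding val_def using gS ori_P[OF t] by blast
        finally show ?thesis .
      qed
      have "z \<in> lin_span (sigma_vec tail ` Bs)" using zC span by simp
      then obtain TT cc where TT: "finite TT" "TT \<subseteq> sigma_vec tail ` Bs" "z = (\<lambda>e. \<Sum>x\<in>TT. cc x * x e)"
        unfolding lin_span_def by blast
      have zero: "(\<Sum>t\<in>X. a t * (\<Sum>e\<in>edges F. z e * Delta tail ori e t)) = 0"
      proof (rule LIN[OF TT(3)], rule ballI)
        fix x assume "x \<in> TT"
        then obtain W where W: "W \<in> Bs" "x = sigma_vec tail W" using TT(2) by blast
        have "W \<in> \<Gamma>" using W(1) Bs(1) by blast
        hence "(\<Sum>t\<in>X. a t * (\<Sum>e\<in>edges F. CM tail W e * Delta tail ori e t)) = 0" using hyp by blast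
        thus "(\<Sum>t\<in>X. a t * (\<Sum>e\<in>edges F. x e * Delta tail ori e t)) = 0" using W(2) unfolding CM_def by simp
      qed
      have "(\<Sum>t\<in>X. a t * (\<Sum>e\<in>edges F. z e * Delta tail ori e t)) = (\<Sum>t\<in>X. a t * val t)"
        by (rule sum.cong[OF refl]) (use Mz XT in auto)
      also have "\<dots> = a t0 * val t0 + (\<Sum>t\<in>X - {t0}. a t * val t)" by (rule sum.remove[OF finX t0])
      also have "(\<Sum>t\<in>X - {t0}. a t * val t) = 0"
      proof (rule sum.neutral, rule ballI)
        fix t assume t: "t \<in> X - {t0}"
        have "t \<notin> walk_edges w" using t w(2) B(2) by blast
        hence "val t = 0" unfolding val_def using VAL0[OF w(1)] t XT by blast
        thus "a t * val t = 0" by simp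
      qed
      finally have "a t0 * val t0 = 0" using zero by simp
      moreover have "val t0 \<noteq> 0" unfolding val_def by (rule VAL1[OF w(1) t0t t0w])
      ultimately show False using a0 by simp
    qed
  qed
qed

end

definition chain_r :: "('a \<times> 'a) set \<Rightarrow> 'a list \<Rightarrow> bool" where
  "chain_r r xs \<longleftrightarrow> (\<forall>i. Suc i < length xs \<longrightarrow> (xs!i, xs!Suc i) \<in> r)"

lemma path_exists:
  assumes "(a,b) \<in> r\<^sup>*"
  shows "\<exists>xs. xs \<noteq> [] \<and> hd xs = a \<and> last xs = b \<and> distinct xs \<and> chain_r r xs"
  using assms
proof (induction rule: rtrancl_induct)
  case base
  show ?case by (intro exI[of _ "[a]"]) (simp add: chain_r_def)
next
  case (step b c)
  then obtain xs where xs: "xs \<noteq> []" "hd xs = a" "last xs = b" "distinct xs" "chain_r r xs" by blast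
  show ?case
  proof (cases "c \<in> set xs")
    case True
    then obtain i where i: "i < length xs" "xs!i = c" by (auto simp: in_set_conv_nth)
    let ?ys = "take (Suc i) xs"
    have "?ys \<noteq> []" using xs(1) by simp
    moreover have "hd ?ys = a" using xs(1,2) by (simp add: hd_take)
    moreover have "last ?ys = c"
    proof -
      have "length ?ys = Suc i" using i(1) by simp
      hence "last ?ys = ?ys ! i" using xs(1) by (simp add: last_conv_nth)
      thus ?thesis using i by simp
    qed
    moreover have "distinct ?ys" using xs(4) by simp
    moreover have "chain_r r ?ys" using xs(5) i(1) unfolding chain_r_def by auto
    ultimately show ?thesis by blast
  next
    case False
    let ?ys = "xs @ [c]"
    have "?ys \<noteq> []" by simp
    moreover have "hd ?ys = a" using xs(1,2) by simp
    moreover have "last ?ys = c" by simp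
    moreover have "distinct ?ys" using xs(4) False by simp
    moreover have "chain_r r ?ys"
      unfolding chain_r_def
    proof (intro allI impI)
      fix l assume l: "Suc l < length ?ys"
      show "(?ys!l, ?ys!Suc l) \<in> r"
      proof (cases "Suc l < length xs")
        case True thus ?thesis using xs(5) unfolding chain_r_def by (simp add: nth_append)
      next
        case False
        hence "Suc l = length xs" using l by simp
        moreover hence "xs!l = b" using xs(1,3) by (metis diff_Suc_1 last_conv_nth)
        ultimately show ?thesis using step(2) by (simp add: nth_append)
      qed
    qed
    ultimately show ?thesis by blast
  qed
qed

lemma AR3: "(j::nat) < k \<Longrightarrow> Suc m < k \<Longrightarrow> (Suc j + m) mod k \<noteq> j"
proof (cases "Suc j + m < k")
  case True thus ?thesis by simp
next
  case False
  assume jk: "j < k" and mk: "Suc m < k"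
  have "(Suc j + m) mod k = (Suc j + m - k) mod k" using False by (simp add: le_mod_geq)
  also have "\<dots> = Suc j + m - k" using jk mk by simp
  finally show ?thesis using mk False by simp
qed

context thm9
begin

definition RB :: "'h set set set \<Rightarrow> ('h set set \<times> 'h set set) set" where
  "RB B = {(C,C'). C \<in> P \<and> C' \<in> P \<and> (\<exists>t\<in>B. \<exists>s\<in>C. \<exists>s'\<in>C'. t = {s,s'})}"

lemma RB_I: "C \<in> P \<Longrightarrow> C' \<in> P \<Longrightarrow> t \<in> B \<Longrightarrow> s \<in> C \<Longrightarrow> s' \<in> C' \<Longrightarrow> t = {s,s'} \<Longrightarrow> (C,C') \<in> RB B"
  unfolding RB_def by blast

lemma RB_E: "(C,C') \<in> RB B \<Longrightarrow> \<exists>t s s'. C \<in> P \<and> C' \<in> P \<and> t \<in> B \<and> s \<in> C \<and> s' \<in> C' \<and> t = {s,s'}"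
  unfolding RB_def by blast

lemma RB_sym: "sym (RB B)"
proof (rule symI)
  fix x y assume "(x,y) \<in> RB B"
  then obtain t s s' where h: "x \<in> P" "y \<in> P" "t \<in> B" "s \<in> x" "s' \<in> y" "t = {s,s'}" using RB_E by blast
  have "t = {s',s}" using h(6) by auto
  thus "(y,x) \<in> RB B" using RB_I[OF h(2,1,3,5,4)] by simp
qed

lemma RB_swap: "(x,y) \<in> (RB B)\<^sup>* \<Longrightarrow> (y,x) \<in> (RB B)\<^sup>*"
  using sym_rtrancl[OF RB_sym] unfolding sym_def by blast

lemma SAME: "s \<in> C \<Longrightarrow> C \<in> P \<Longrightarrow> s \<in> C' \<Longrightarrow> C' \<in> P \<Longrightarrow> C = C'"
  using incT by metis

lemma L1:
  assumes w: "circuit_walk T w" and WE: "walk_edges w \<subseteq> insert t' B" and it: "t' \<in> walk_edges w"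
    and st: "t' = {s, s'}"
  shows "(inc T s, inc T s') \<in> (RB B)\<^sup>*"
proof -
  define k where "k = length w"
  have D: "distinct (walk_halfs w)" using w unfolding circuit_walk_def by simp
  define ed where "ed i = {snd (w!i), fst (w!(Suc i mod k))}" for i
  define vt where "vt i = inc T (fst (w!i))" for i
  obtain j where j: "j < k" "t' = ed j" using it unfolding walk_edges_def ed_def k_def by blast
  have k0: "0 < k" using j(1) by simp
  have mem: "ed i \<in> walk_edges w" if "i < k" for i
  proof -
    have "i < length w" using that k_def by simp
    thus ?thesis unfolding walk_edges_def ed_def k_def by blast
  qed
  have stp: "(vt i, vt (Suc i mod k)) \<in> RB B" if i: "i < k" "i \<noteq> j" for i
  proof -
    have iw: "i < length w" using i k_def by simp
    have si: "Suc i mod k < length w" using k0 k_def by simp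
    have "ed i \<noteq> ed j" using walk_edge_inj[OF D iw, of j] j(1) i(2) k_def unfolding ed_def by auto
    hence eB: "ed i \<in> B" using mem[OF i(1)] WE j(2) by auto
    have "vt i \<in> P" "vt (Suc i mod k) \<in> P" using TW(4)[OF w iw] TW(4)[OF w si] vt_def by auto
    moreover have "snd (w!i) \<in> vt i" using TW(6)[OF w iw] vt_def by simp
    moreover have "fst (w!(Suc i mod k)) \<in> vt (Suc i mod k)" using TW(5)[OF w si] vt_def by simp
    ultimately show ?thesis using RB_I[OF _ _ eB] ed_def by blast
  qed
  have ind: "m < k \<longrightarrow> (vt (Suc j mod k), vt ((Suc j + m) mod k)) \<in> (RB B)\<^sup>*" for m
  proof (induction m)
    case 0 show ?case by simp
  next
    case (Suc m)
    show ?case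
    proof
      assume m: "Suc m < k"
      have IH: "(vt (Suc j mod k), vt ((Suc j + m) mod k)) \<in> (RB B)\<^sup>*" using Suc m by simp
      have i: "(Suc j + m) mod k < k" using k0 by simp
      have ne: "(Suc j + m) mod k \<noteq> j" by (rule AR3[OF j(1) m])
      have "Suc ((Suc j + m) mod k) mod k = (Suc j + Suc m) mod k" by (simp add: mod_Suc_eq)
      hence "(vt ((Suc j + m) mod k), vt ((Suc j + Suc m) mod k)) \<in> RB B" using stp[OF i ne] by simp
      thus "(vt (Suc j mod k), vt ((Suc j + Suc m) mod k)) \<in> (RB B)\<^sup>*" using IH by (rule rtrancl_into_rtrancl[rotated])
    qed
  qed
  have "(Suc j + (k - 1)) mod k = j" using j(1) k0 by simp
  hence R1: "(vt (Suc j mod k), vt j) \<in> (RB B)\<^sup>*" using ind[of "k - 1"] k0 by simp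
  have jw: "j < length w" using j(1) k_def by simp
  have e1: "inc T (snd (w!j)) = vt j" using incT[OF TW(6)[OF w jw] TW(4)[OF w jw]] vt_def by simp
  have e2: "inc T (fst (w!(Suc j mod k))) = vt (Suc j mod k)" using vt_def by simp
  have "(s = snd (w!j) \<and> s' = fst (w!(Suc j mod k))) \<or> (s = fst (w!(Suc j mod k)) \<and> s' = snd (w!j))"
    using j(2) st unfolding ed_def by (metis doubleton_eq_iff)
  thus ?thesis
  proof
    assume "s = snd (w!j) \<and> s' = fst (w!(Suc j mod k))"
    thus ?thesis using R1 e1 e2 RB_swap by simp
  next
    assume "s = fst (w!(Suc j mod k)) \<and> s' = snd (w!j)"
    thus ?thesis using R1 e1 e2 by simp
  qed
qed

end

context thm9
begin

lemma L2:
  assumes path: "(C1,C2) \<in> (RB B)\<^sup>*" and t: "t \<in> \<tau>" "t \<notin> B" and BT: "B \<subseteq> \<tau>"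
    and st: "t = {s1,s2}" "s1 \<in> C1" "s2 \<in> C2" "C1 \<in> P" "C2 \<in> P" "s1 \<noteq> s2"
  shows "\<exists>w. circuit_walk T w \<and> walk_edges w \<subseteq> insert t B"
proof -
  obtain xs where xs: "xs \<noteq> []" "hd xs = C1" "last xs = C2" "distinct xs" "chain_r (RB B) xs"
    using path_exists[OF path] by blast
  define m where "m = length xs - 1"
  have lx: "length xs = Suc m" using xs(1) m_def by simp
  have x0: "xs!0 = C1" using xs(1,2) by (simp add: hd_conv_nth)
  have xm: "xs!m = C2" using xs(1,3) m_def by (simp add: last_conv_nth)
  have ch: "(xs!i, xs!Suc i) \<in> RB B" if "i < m" for i using xs(5) that lx unfolding chain_r_def by simp
  have xP: "xs!i \<in> P" if "i \<le> m" for i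
  proof (cases i)
    case 0 thus ?thesis using x0 st(4) by simp
  next
    case (Suc i')
    hence "i' < m" using that by simp
    from RB_E[OF ch[OF this]] show ?thesis using Suc by blast
  qed
  have ex: "\<forall>i. \<exists>p. i < m \<longrightarrow> (fst p \<in> xs!i \<and> snd p \<in> xs!Suc i \<and> {fst p, snd p} \<in> B)"
  proof
    fix i show "\<exists>p. i < m \<longrightarrow> (fst p \<in> xs!i \<and> snd p \<in> xs!Suc i \<and> {fst p, snd p} \<in> B)"
    proof (cases "i < m")
      case True
      from RB_E[OF ch[OF True]] obtain b o' n where "b \<in> B" "o' \<in> xs!i" "n \<in> xs!Suc i" "b = {o',n}" by blast
      thus ?thesis by (intro exI[of _ "(o',n)"]) simp
    qed simp
  qed
  obtain f where f: "\<forall>i. i < m \<longrightarrow> (fst (f i) \<in> xs!i \<and> snd (f i) \<in> xs!Suc i \<and> {fst (f i), snd (f i)} \<in> B)"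
    using choice[OF ex] by blast
  define bo where "bo i = fst (f i)" for i
  define bn where "bn i = snd (f i)" for i
  have bo: "bo i \<in> xs!i" "bn i \<in> xs!Suc i" "{bo i, bn i} \<in> B" if "i < m" for i
    using f that bo_def bn_def by auto
  define inn where "inn i = (if i = 0 then s1 else bn (i - 1))" for i
  define out where "out i = (if i = m then s2 else bo i)" for i
  have inn_in: "inn i \<in> xs!i" if "i \<le> m" for i
  proof (cases i)
    case 0 thus ?thesis using inn_def x0 st(2) by simp
  next
    case (Suc i') thus ?thesis using inn_def bo(2)[of i'] that by simp
  qed
  have out_in: "out i \<in> xs!i" if "i \<le> m" for i
  proof (cases "i = m")
    case True thus ?thesis using out_def xm st(3) by simp
  next
    case False thus ?thesis using out_def bo(1)[of i] that by simp
  qed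
  have incI: "inc T (inn i) = xs!i" "inc T (out i) = xs!i" if "i \<le> m" for i
    using incT[OF inn_in[OF that] xP[OF that]] incT[OF out_in[OF that] xP[OF that]] by auto
  have HP: "inn i \<in> \<Union>P" "out i \<in> \<Union>P" if "i \<le> m" for i
    using inn_in[OF that] out_in[OF that] xP[OF that] by auto
  have xinj: "xs!i = xs!j \<Longrightarrow> i = j" if "i \<le> m" "j \<le> m" for i j
    using nth_eq_iff_index_eq[OF xs(4), of i j] that lx by simp
  have io: "inn i \<noteq> out i" if i: "i \<le> m" for i
  proof
    assume eq: "inn i = out i"
    show False
    proof (cases "m = 0")
      case True
      thus False using eq i inn_def out_def st(6) by simp
    next
      case m0: False
      show False
      proof (cases "i = 0")
        case True
        hence "s1 = bo 0" using eq inn_def out_def m0 by simp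
        hence "s1 \<in> t" "s1 \<in> {bo 0, bn 0}" using st(1) by auto
        moreover have "{bo 0, bn 0} \<in> B" using bo(3) m0 by simp
        ultimately have "t = {bo 0, bn 0}" using T2[OF t(1)] BT by blast
        thus False using t(2) \<open>{bo 0, bn 0} \<in> B\<close> by simp
      next
        case i0: False
        show False
        proof (cases "i = m")
          case True
          hence "bn (m - 1) = s2" using eq inn_def out_def i0 by simp
          hence "s2 \<in> t" "s2 \<in> {bo (m-1), bn (m-1)}" using st(1) by auto
          moreover have "{bo (m-1), bn (m-1)} \<in> B" using bo(3) m0 by simp
          ultimately have "t = {bo (m-1), bn (m-1)}" using T2[OF t(1)] BT by blast
          thus False using t(2) \<open>{bo (m-1), bn (m-1)} \<in> B\<close> by simp
        next
          case im: False
          hence im': "i < m" using i by simp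
          have e: "bn (i - 1) = bo i" using eq inn_def out_def i0 im by simp
          have B1: "{bo (i-1), bn (i-1)} \<in> \<tau>" "{bo i, bn i} \<in> \<tau>" using bo(3) im' BT by auto
          have "{bo (i-1), bn (i-1)} = {bo i, bn i}" using T2[OF B1, of "bo i"] e by simp
          hence "bo (i-1) = bo i \<or> bo (i-1) = bn i" by (metis doubleton_eq_iff)
          moreover have "bo (i-1) \<in> xs!(i-1)" using bo(1) im' by simp
          moreover have "bo i \<in> xs!i" "bn i \<in> xs!Suc i" using bo(1,2) im' by auto
          moreover have "xs!(i-1) \<in> P" "xs!i \<in> P" "xs!Suc i \<in> P" using xP im' by auto
          ultimately have "xs!(i-1) = xs!i \<or> xs!(i-1) = xs!Suc i" using SAME by metis
          moreover have "xs!(i-1) \<noteq> xs!i"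
          proof
            assume "xs!(i-1) = xs!i"
            hence "i - 1 = i" using xinj[of "i-1" i] im' by simp
            thus False using i0 by simp
          qed
          moreover have "xs!(i-1) \<noteq> xs!Suc i"
          proof
            assume "xs!(i-1) = xs!Suc i"
            hence "i - 1 = Suc i" using xinj[of "i-1" "Suc i"] im' by simp
            thus False by simp
          qed
          ultimately show False by simp
        qed
      qed
    qed
  qed
  define w where "w = map (\<lambda>i. (inn i, out i)) [0..<Suc m]"
  have lw: "length w = Suc m" using w_def by simp
  have wi: "w!i = (inn i, out i)" if "i < Suc m" for i using that w_def by (simp del: upt_Suc)
  have edg: "{snd (w!i), fst (w!(Suc i mod length w))} \<in> insert t B" if i: "i < length w" for i
  proof (cases "i = m")
    case True
    have "Suc i mod length w = 0" using True lw by simp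
    hence "{snd (w!i), fst (w!(Suc i mod length w))} = {s2, s1}" using wi[of i] wi[of 0] i lw True inn_def out_def by simp
    thus ?thesis using st(1) by auto
  next
    case False
    hence im: "i < m" using i lw by simp
    have "Suc i mod length w = Suc i" using im lw by simp
    hence "{snd (w!i), fst (w!(Suc i mod length w))} = {bo i, bn i}" using wi[of i] wi[of "Suc i"] im inn_def out_def by simp
    thus ?thesis using bo(3)[OF im] by simp
  qed
  have CW: "closed_walk T w"
    unfolding closed_walk_def
  proof (intro conjI ballI allI impI)
    fix p assume "p \<in> set w"
    then obtain i where i: "i < length w" "p = w!i" by (auto simp: in_set_conv_nth)
    have im: "i \<le> m" using i lw by simp
    show "dir_single_trans T p" unfolding dir_single_trans_def i(2) wi[OF i(1)[unfolded lw]]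
      using HP[OF im] io[OF im] incI[OF im] halfsT by simp
  next
    fix i assume i: "i < length w"
    show "{snd (w!i), fst (w!(Suc i mod length w))} \<in> edges T" using edg[OF i] t(1) BT edT by blast
  qed
  have DD: "distinct (walk_halfs w)"
  proof (rule DW')
    fix i j assume i: "i < length w" and j: "j < length w" and e: "fst (w!i) = fst (w!j)"
    have "inn i = inn j" using e wi i j lw by simp
    hence "xs!i = xs!j" using incI i j lw by (metis less_Suc_eq_le)
    thus "i = j" using xinj i j lw by simp
  next
    fix i j assume i: "i < length w" and j: "j < length w" and e: "snd (w!i) = snd (w!j)"
    have "out i = out j" using e wi i j lw by simp
    hence "xs!i = xs!j" using incI i j lw by (metis less_Suc_eq_le)
    thus "i = j" using xinj i j lw by simp
  next
    fix i j assume i: "i < length w" and j: "j < length w"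
    show "fst (w!i) \<noteq> snd (w!j)"
    proof
      assume e: "fst (w!i) = snd (w!j)"
      have "inn i = out j" using e wi i j lw by simp
      hence "xs!i = xs!j" using incI i j lw by (metis less_Suc_eq_le)
      hence "i = j" using xinj i j lw by simp
      thus False using io \<open>inn i = out j\<close> i lw by simp
    qed
  qed
  have "circuit_walk T w" unfolding circuit_walk_def using CW DD lw by auto
  moreover have "walk_edges w \<subseteq> insert t B" unfolding walk_edges_def using edg by blast
  ultimately show ?thesis by blast
qed

end

context thm9
begin

abbreviation "F' \<equiv> del_edges F E"

lemma F'_simps: "edges F' = edges F - E" "halfs F' = halfs F - \<Union>E" "inc F' = inc F" "verts F' = verts F"
  by (simp_all add: del_edges_def)

lemma GF': "is_graph F'" by (rule del_graph[OF G ES])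

lemma DF': "directed_version F' tail" using DV unfolding directed_version_def F'_simps by simp

lemma tailE: "e \<in> E \<Longrightarrow> tail e \<notin> halfs F'" "e \<in> E \<Longrightarrow> head tail e \<notin> halfs F'"
proof -
  assume e: "e \<in> E"
  have eF: "e \<in> edges F" using e ES by blast
  have "tail e \<in> e" "head tail e \<in> e" using head_props[OF G DV eF] by auto
  thus "tail e \<notin> halfs F'" "head tail e \<notin> halfs F'" using e F'_simps by auto
qed

definition gw :: "('h \<times> 'h) list \<Rightarrow> 'h \<Rightarrow> rat" where "gw W h = of_int (fl W h)"

lemma GW1: assumes W: "closed_walk F' W" shows "antisym_g F tail (gw W)"
  unfolding antisym_g_def
proof
  fix e assume e: "e \<in> edges F"
  show "gw W (tail e) + gw W (head tail e) = 0"
  proof (cases "e \<in> E")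
    case True
    thus ?thesis using WL4[OF W tailE(1)[OF True]] WL4[OF W tailE(2)[OF True]] gw_def by simp
  next
    case False
    hence "e \<in> edges F'" using e F'_simps by simp
    thus ?thesis using WL2[OF GF' DF' W] gw_def by (metis of_int_add of_int_0)
  qed
qed

lemma GW2: assumes W: "closed_walk F' W" and e: "e \<in> edges F" shows "CM tail W e = gw W (tail e)"
proof (cases "e \<in> E")
  case True
  hence "e \<notin> edges F'" using F'_simps by simp
  hence "sigma tail W e = 0" by (rule WL3[OF W])
  thus ?thesis using WL4[OF W tailE(1)[OF True]] by (simp add: gw_def CM_def sigma_vec_def)
next
  case False
  hence "e \<in> edges F'" using e F'_simps by simp
  hence "sigma tail W e = fl W (tail e)" by (rule WL1[OF GF' DF' W])
  thus ?thesis by (simp add: gw_def CM_def sigma_vec_def)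
qed

lemma GW3: assumes W: "closed_walk F' W" shows "(\<Sum>h\<in>Hv v. gw W h) = 0"
proof -
  have "(\<Sum>h\<in>{h\<in>halfs F'. inc F' h = v}. fl W h) = (\<Sum>h\<in>Hv v. fl W h)"
  proof (rule sum.mono_neutral_left[OF Hv_fin])
    show "{h\<in>halfs F'. inc F' h = v} \<subseteq> Hv v" unfolding Hv_def F'_simps by auto
    show "\<forall>i\<in>Hv v - {h\<in>halfs F'. inc F' h = v}. fl W i = 0"
    proof
      fix h assume "h \<in> Hv v - {h\<in>halfs F'. inc F' h = v}"
      hence "h \<notin> halfs F'" unfolding Hv_def F'_simps by auto
      thus "fl W h = 0" by (rule WL4[OF W])
    qed
  qed
  hence "(\<Sum>h\<in>Hv v. fl W h) = 0" using WL5[OF GF' W] by simp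
  thus ?thesis unfolding gw_def by (metis of_int_0 of_int_sum)
qed

lemma MG: assumes gA: "antisym_g F tail g" and t: "t \<in> \<tau>"
  shows "(\<Sum>e\<in>edges F. g (tail e) * Delta tail ori e t) = (\<Sum>h\<in>ori t. g h)"
proof -
  have "(\<Sum>e\<in>edges F. g (tail e) * Delta tail ori e t) = (\<Sum>h\<in>halfs F. if h \<in> ori t then g h else 0)" by (rule GL2[OF G DV gA])
  also have "\<dots> = (\<Sum>h\<in>halfs F \<inter> ori t. g h)" using g_fin_halfs[OF G] by (simp add: sum.inter_restrict)
  also have "halfs F \<inter> ori t = ori t" using ori_sub[OF t] by blast
  finally show ?thesis .
qed

lemma CIRC: assumes gA: "antisym_g F tail g" and C: "C \<in> P"
  shows "(\<Sum>s\<in>C. \<Sum>h\<in>s. g h) = 0"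
proof -
  have fC: "finite C" by (rule finC[OF C])
  have d1: "\<forall>A\<in>C. \<forall>B\<in>C. A \<noteq> B \<longrightarrow> A \<inter> B = {}" using U1[OF _ C _ C] by blast
  have f1: "\<forall>A\<in>C. finite A"
  proof
    fix A assume "A \<in> C"
    hence "card A = 2" by (rule ST_card[OF _ C])
    thus "finite A" by (intro card_ge_0_finite) simp
  qed
  have "(\<Sum>h\<in>\<Union>C. g h) = (\<Sum>s\<in>C. \<Sum>h\<in>s. g h)" using sum.Union_disjoint[OF f1 d1] by simp
  moreover have "(\<Sum>h\<in>\<Union>C. g h) = 0"
  proof -
    let ?Es = "{e\<in>edges F. e \<subseteq> \<Union>C}"
    have U: "\<Union>?Es = \<Union>C"
    proof
      show "\<Union>?Es \<subseteq> \<Union>C" by blast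
      show "\<Union>C \<subseteq> \<Union>?Es"
      proof
        fix h assume h: "h \<in> \<Union>C"
        hence "h \<in> halfs F" using ST_sub[OF _ C] by blast
        then obtain e where e: "e \<in> edges F" "h \<in> e" using g_half[OF G] by blast
        have "e \<subseteq> \<Union>C" by (rule CEC[OF C h e])
        thus "h \<in> \<Union>?Es" using e by blast
      qed
    qed
    have fE: "\<forall>A\<in>?Es. finite A" using g_edge_fin[OF G] by blast
    have dE: "\<forall>A\<in>?Es. \<forall>B\<in>?Es. A \<noteq> B \<longrightarrow> A \<inter> B = {}" using isgD(4)[OF G] by blast
    have "(\<Sum>h\<in>\<Union>?Es. g h) = (\<Sum>e\<in>?Es. \<Sum>h\<in>e. g h)" using sum.Union_disjoint[OF fE dE] by simp
    also have "\<dots> = 0"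
    proof (rule sum.neutral, rule ballI)
      fix e assume "e \<in> ?Es"
      hence e: "e \<in> edges F" by simp
      have hp: "head tail e \<noteq> tail e" "e = {tail e, head tail e}" using head_props[OF G DV e] by auto
      have "(\<Sum>h\<in>e. g h) = g (tail e) + g (head tail e)" using hp by (metis sum.insert_if empty_iff finite.emptyI finite.insertI insert_iff sum.empty add_0_right)
      thus "(\<Sum>h\<in>e. g h) = 0" using gA e unfolding antisym_g_def by simp
    qed
    finally show ?thesis using U by simp
  qed
  ultimately show ?thesis by simp
qed

end

context thm9
begin

lemma sfin: "s \<in> \<Union>P \<Longrightarrow> finite s"
  using ST_card by (metis UnionE card.infinite zero_neq_numeral)

lemma CUT:
  assumes CI: "col_indep \<Gamma> (edges T) (\<lambda>W t. \<Sum>e\<in>edges F. CM tail W e * Delta tail ori e t) X"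
    and t: "t \<in> X" "t = {s1,s2}" "s1 \<in> \<Union>P" "s2 \<in> \<Union>P"
  shows "(inc T s1, inc T s2) \<in> (RB (\<tau> - X))\<^sup>*"
proof (rule ccontr)
  assume nr: "(inc T s1, inc T s2) \<notin> (RB (\<tau> - X))\<^sup>*"
  define R where "R = RB (\<tau> - X)"
  define C1 where "C1 = inc T s1"
  define S where "S = {C. (C1, C) \<in> R\<^sup>*}"
  define US where "US = \<Union>S"
  have XT: "X \<subseteq> \<tau>" using CI edT unfolding col_indep_def by simp
  have C1P: "C1 \<in> P" using incT'[OF t(3)] C1_def by simp
  have SP: "S \<subseteq> P"
  proof
    fix C assume "C \<in> S"
    hence "(C1, C) \<in> R\<^sup>*" using S_def by simp
    thus "C \<in> P"
    proof (cases rule: rtranclE)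
      case base thus ?thesis using C1P by simp
    next
      case (step y)
      thus ?thesis using RB_E R_def by blast
    qed
  qed
  have memb: "(s \<in> US) = (inc T s \<in> S)" if s: "s \<in> \<Union>P" for s
  proof
    assume "s \<in> US"
    then obtain C where "C \<in> S" "s \<in> C" using US_def by blast
    moreover hence "inc T s = C" using incT SP by blast
    ultimately show "inc T s \<in> S" by simp
  next
    assume "inc T s \<in> S"
    thus "s \<in> US" using incT'[OF s] US_def by blast
  qed
  have clos: "y \<in> US" if t': "t' \<in> \<tau>" "t' \<notin> X" "x \<in> t'" "y \<in> t'" "x \<in> US" for t' x y
  proof (cases "x = y")
    case True thus ?thesis using t' by simp
  next
    case False
    obtain a b v where ab: "t' = {a,b}" "a \<in> \<Union>P" "b \<in> \<Union>P" using T1[OF t'(1)] by blast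
    have e: "t' = {x,y}" using ab(1) t'(3,4) False by auto
    have xyP: "x \<in> \<Union>P" "y \<in> \<Union>P" using ab t'(3,4) by auto
    have "(inc T x, inc T y) \<in> R"
      unfolding R_def using incT'[OF xyP(1)] incT'[OF xyP(2)] t'(1,2) e by (intro RB_I) auto
    moreover have "inc T x \<in> S" using memb[OF xyP(1)] t'(5) by simp
    ultimately have "inc T y \<in> S" unfolding S_def by (simp add: rtrancl_into_rtrancl)
    thus ?thesis using memb[OF xyP(2)] by simp
  qed
  have s1U: "s1 \<in> US" using memb[OF t(3)] C1_def S_def by simp
  have s2U: "s2 \<notin> US" using memb[OF t(4)] nr C1_def S_def R_def by simp
  define a' where "a' t' = (if (\<exists>x\<in>t'. x \<in> US) \<and> (\<exists>x\<in>t'. x \<notin> US) then (if ori t' \<in> US then 1 else -1) else (0::rat))" for t'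
  have a't: "a' t \<noteq> 0" using s1U s2U t(2) unfolding a'_def by auto
  have main: "(\<Sum>t'\<in>X. a' t' * (\<Sum>e\<in>edges F. CM tail W e * Delta tail ori e t')) = 0" if W: "W \<in> \<Gamma>" for W
  proof -
    have CW: "closed_walk F' W" using CS W unfolding cycle_spanning_set_def by blast
    define g where "g = gw W"
    have gA: "antisym_g F tail g" using GW1[OF CW] g_def by simp
    define \<phi> where "\<phi> s = (\<Sum>h\<in>s. g h)" for s
    have Mphi: "(\<Sum>e\<in>edges F. CM tail W e * Delta tail ori e t') = \<phi> (ori t')" if t': "t' \<in> \<tau>" for t'
    proof -
      have "(\<Sum>e\<in>edges F. CM tail W e * Delta tail ori e t') = (\<Sum>e\<in>edges F. g (tail e) * Delta tail ori e t')"
        by (rule sum.cong[OF refl]) (use GW2[OF CW] g_def in simp)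
      also have "\<dots> = \<phi> (ori t')" unfolding \<phi>_def by (rule MG[OF gA t'])
      finally show ?thesis .
    qed
    have pert: "(\<Sum>s\<in>t' \<inter> US. \<phi> s) = (if t' \<in> X then a' t' * \<phi> (ori t') else 0)" if t': "t' \<in> \<tau>" for t'
    proof -
      obtain x y v where d: "t' = {x,y}" "x \<in> \<Union>P" "y \<in> \<Union>P" "x \<inter> y = {}" "x \<union> y = Hv v" "v \<in> verts F" "x \<noteq> y"
        using T1[OF t'] by blast
      have fx: "finite x" "finite y" using sfin d(2,3) by auto
      have cons: "\<phi> x + \<phi> y = 0"
      proof -
        have "(\<Sum>h\<in>Hv v. g h) = \<phi> x + \<phi> y" unfolding \<phi>_def d(5)[symmetric] by (rule sum.union_disjoint[OF fx d(4)])
        thus ?thesis using GW3[OF CW] g_def by simp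
      qed
      have o: "ori t' = x \<or> ori t' = y" using ori_in[OF t'] d(1) by simp
      show ?thesis
      proof (cases "x \<in> US"; cases "y \<in> US")
        assume "x \<in> US" "y \<in> US"
        hence "t' \<inter> US = {x,y}" "a' t' = 0" using d(1) unfolding a'_def by auto
        thus ?thesis using cons d(7) by simp
      next
        assume xu: "x \<in> US" "y \<notin> US"
        have tX: "t' \<in> X" using clos[OF t' _ _ _ xu(1), of y] xu(2) d(1) by auto
        have "t' \<inter> US = {x}" using d(1) xu by auto
        moreover have "a' t' = (if ori t' \<in> US then 1 else -1)" using d(1) xu unfolding a'_def by auto
        ultimately show ?thesis using tX o xu cons by (auto simp: eq_neg_iff_add_eq_0 add.commute)
      next
        assume yu: "x \<notin> US" "y \<in> US"
        have tX: "t' \<in> X" using clos[OF t' _ _ _ yu(2), of x] yu(1) d(1) by auto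
        have "t' \<inter> US = {y}" using d(1) yu by auto
        moreover have "a' t' = (if ori t' \<in> US then 1 else -1)" using d(1) yu unfolding a'_def by auto
        ultimately show ?thesis using tX o yu cons by (auto simp: eq_neg_iff_add_eq_0)
      next
        assume "x \<notin> US" "y \<notin> US"
        hence "t' \<inter> US = {}" "a' t' = 0" using d(1) unfolding a'_def by auto
        thus ?thesis by simp
      qed
    qed
    have total1: "(\<Sum>s\<in>US. \<phi> s) = 0"
    proof -
      have fS: "\<forall>A\<in>S. finite A" using finC SP by blast
      have dS: "\<forall>A\<in>S. \<forall>B\<in>S. A \<noteq> B \<longrightarrow> A \<inter> B = {}"
      proof (intro ballI impI)
        fix A B assume AB: "A \<in> S" "B \<in> S" "A \<noteq> B"
        show "A \<inter> B = {}"
        proof (rule ccontr)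
          assume "A \<inter> B \<noteq> {}"
          then obtain s where "s \<in> A" "s \<in> B" by blast
          hence "A = B" using SAME AB SP by blast
          thus False using AB(3) by simp
        qed
      qed
      have "(\<Sum>s\<in>US. \<phi> s) = (\<Sum>C\<in>S. \<Sum>s\<in>C. \<phi> s)" unfolding US_def using sum.Union_disjoint[OF fS dS] by simp
      also have "\<dots> = 0"
        by (rule sum.neutral) (use CIRC[OF gA] SP \<phi>_def in auto)
      finally show ?thesis .
    qed
    have total2: "(\<Sum>s\<in>US. \<phi> s) = (\<Sum>t'\<in>\<tau>. \<Sum>s\<in>t' \<inter> US. \<phi> s)"
    proof -
      have U: "US = (\<Union>t'\<in>\<tau>. t' \<inter> US)"
      proof
        show "US \<subseteq> (\<Union>t'\<in>\<tau>. t' \<inter> US)"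
        proof
          fix s assume s: "s \<in> US"
          hence "s \<in> \<Union>P" using SP US_def by blast
          then obtain t' where "t' \<in> \<tau>" "s \<in> t'" using T3 by blast
          thus "s \<in> (\<Union>t'\<in>\<tau>. t' \<inter> US)" using s by blast
        qed
      qed blast
      have f: "\<forall>t'\<in>\<tau>. finite (t' \<inter> US)"
      proof
        fix t' assume "t' \<in> \<tau>"
        then obtain x y v where "t' = {x,y}" using T1 by metis
        thus "finite (t' \<inter> US)" by simp
      qed
      have dj: "\<forall>i\<in>\<tau>. \<forall>j\<in>\<tau>. i \<noteq> j \<longrightarrow> (i \<inter> US) \<inter> (j \<inter> US) = {}"
      proof (intro ballI impI)
        fix i j assume ij: "i \<in> \<tau>" "j \<in> \<tau>" "i \<noteq> j"
        show "(i \<inter> US) \<inter> (j \<inter> US) = {}"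
        proof (rule ccontr)
          assume "(i \<inter> US) \<inter> (j \<inter> US) \<noteq> {}"
          then obtain s where "s \<in> i" "s \<in> j" by blast
          hence "i = j" using T2[OF ij(1,2)] by simp
          thus False using ij(3) by simp
        qed
      qed
      show ?thesis by (subst U) (rule sum.UNION_disjoint[OF fin_tau f dj])
    qed
    have "(\<Sum>t'\<in>X. a' t' * (\<Sum>e\<in>edges F. CM tail W e * Delta tail ori e t')) = (\<Sum>t'\<in>X. a' t' * \<phi> (ori t'))"
      by (rule sum.cong[OF refl]) (use Mphi XT in auto)
    also have "\<dots> = (\<Sum>t'\<in>\<tau> \<inter> X. a' t' * \<phi> (ori t'))" using XT by (simp add: Int_absorb1)
    also have "\<dots> = (\<Sum>t'\<in>\<tau>. if t' \<in> X then a' t' * \<phi> (ori t') else 0)" by (rule sum.inter_restrict[OF fin_tau])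
    also have "\<dots> = (\<Sum>t'\<in>\<tau>. \<Sum>s\<in>t' \<inter> US. \<phi> s)" by (rule sum.cong[OF refl]) (use pert in simp)
    also have "\<dots> = 0" using total1 total2 by simp
    finally show ?thesis .
  qed
  have "\<forall>t'\<in>X. a' t' = 0" using CI main unfolding col_indep_def by blast
  thus False using a't t(1) by blast
qed

end

context thm9
begin

lemma forest_mono: "forest T Y \<Longrightarrow> Z \<subseteq> Y \<Longrightarrow> forest T Z"
  unfolding forest_def by blast

lemma forest_empty: "forest T {}"
  unfolding forest_def
proof (intro conjI notI)
  show "{} \<subseteq> edges T" by simp
next
  assume "\<exists>w. circuit_walk T w \<and> walk_edges w \<subseteq> {}"
  then obtain w where w: "circuit_walk T w" "walk_edges w \<subseteq> {}" by blast
  have "w \<noteq> []" using w(1) unfolding circuit_walk_def by simp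
  hence "{snd (w!0), fst (w!(Suc 0 mod length w))} \<in> walk_edges w" unfolding walk_edges_def by blast
  thus False using w(2) by blast
qed

lemma D2main:
  assumes CI: "col_indep \<Gamma> (edges T) (\<lambda>W t. \<Sum>e\<in>edges F. CM tail W e * Delta tail ori e t) X"
  shows "cocycle_indep T X"
proof -
  have XT: "X \<subseteq> \<tau>" using CI edT unfolding col_indep_def by simp
  define Fam where "Fam = {Y. Y \<subseteq> \<tau> - X \<and> forest T Y}"
  have finF: "finite Fam"
  proof -
    have "Fam \<subseteq> Pow \<tau>" unfolding Fam_def by blast
    moreover have "finite (Pow \<tau>)" using fin_tau by simp
    ultimately show ?thesis by (rule finite_subset)
  qed
  have "{} \<in> Fam" unfolding Fam_def using forest_empty by simp
  hence "Fam \<noteq> {}" by blast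
  then obtain B where B: "B \<in> Fam" and maxB: "\<forall>Y\<in>Fam. B \<le> Y \<longrightarrow> B = Y"
    using finite_has_maximal[OF finF] by blast
  have BX: "B \<subseteq> \<tau> - X" and fB: "forest T B" using B Fam_def by auto
  have BT: "B \<subseteq> \<tau>" using BX by blast
  have notf: "\<not> forest T (insert t' B)" if t': "t' \<in> \<tau> - X" "t' \<notin> B" for t'
  proof
    assume "forest T (insert t' B)"
    hence "insert t' B \<in> Fam" using t' BX Fam_def by auto
    hence "B = insert t' B" using maxB by blast
    thus False using t'(2) by blast
  qed
  have Rsub: "RB (\<tau> - X) \<subseteq> (RB B)\<^sup>*"
  proof
    fix p assume p: "p \<in> RB (\<tau> - X)"
    obtain C C' where pC: "p = (C,C')" by (cases p)
    obtain t' s s' where d: "C \<in> P" "C' \<in> P" "t' \<in> \<tau> - X" "s \<in> C" "s' \<in> C'" "t' = {s,s'}"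
      using RB_E p pC by blast
    show "p \<in> (RB B)\<^sup>*"
    proof (cases "t' \<in> B")
      case True
      hence "(C,C') \<in> RB B" by (rule RB_I[OF d(1,2) _ d(4,5,6)])
      thus ?thesis using pC by simp
    next
      case False
      have "insert t' B \<subseteq> edges T" using d(3) BT edT by auto
      with notf[OF d(3) False] obtain w where w: "circuit_walk T w" "walk_edges w \<subseteq> insert t' B"
        unfolding forest_def by blast
      have "t' \<in> walk_edges w"
      proof (rule ccontr)
        assume "t' \<notin> walk_edges w"
        hence "walk_edges w \<subseteq> B" using w(2) by blast
        thus False using fB w(1) unfolding forest_def by blast
      qed
      hence "(inc T s, inc T s') \<in> (RB B)\<^sup>*" using L1[OF w(1) w(2) _ d(6)] by blast
      thus ?thesis using incT[OF d(4,1)] incT[OF d(5,2)] pC by simp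
    qed
  qed
  have Rstar: "(RB (\<tau> - X))\<^sup>* \<subseteq> (RB B)\<^sup>*" by (rule rtrancl_subset_rtrancl[OF Rsub])
  have "cm_basis T B" unfolding cm_basis_def
  proof (intro conjI allI impI)
    show "forest T B" by (rule fB)
  next
    fix Y assume Y: "forest T Y \<and> B \<subseteq> Y"
    show "Y = B"
    proof (rule ccontr)
      assume "Y \<noteq> B"
      then obtain t where t: "t \<in> Y" "t \<notin> B" using Y by blast
      have tT: "t \<in> \<tau>" using Y t(1) edT unfolding forest_def by blast
      have fi: "forest T (insert t B)" using forest_mono[of Y "insert t B"] Y t(1) by blast
      show False
      proof (cases "t \<in> X")
        case False
        thus False using notf[of t] tT t(2) fi by blast
      next
        case True
        obtain s1 s2 v where d: "t = {s1,s2}" "s1 \<in> \<Union>P" "s2 \<in> \<Union>P" "s1 \<noteq> s2" using T1[OF tT] by metis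
        have "(inc T s1, inc T s2) \<in> (RB (\<tau> - X))\<^sup>*" by (rule CUT[OF CI True d(1,2,3)])
        hence path: "(inc T s1, inc T s2) \<in> (RB B)\<^sup>*" using Rstar by blast
        have "\<exists>w. circuit_walk T w \<and> walk_edges w \<subseteq> insert t B"
          using incT'[OF d(2)] incT'[OF d(3)] d(1,4)
          by (intro L2[OF path tT t(2) BT]) auto
        moreover have "insert t B \<subseteq> edges T" using tT BT edT by auto
        ultimately have "\<not> forest T (insert t B)" unfolding forest_def by blast
        thus False using fi by simp
      qed
    qed
  qed
  moreover have "X \<inter> B = {}" using BX by blast
  moreover have "X \<subseteq> edges T" using XT edT by simp
  ultimately show ?thesis unfolding cocycle_indep_def by blast
qed

end

theorem mainTheorem9:
  fixes F :: "('v,'h) hgraph"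
    and tail :: "'h set \<Rightarrow> 'h"
    and ori :: "'h set set \<Rightarrow> 'h set"
    and P :: "'h set set set"
    and E :: "'h set set"
    and \<Gamma> :: "('h \<times> 'h) list set"
  assumes "is_graph F"
    and "four_regular F"
    and "directed_version F tail"
    and "transitional_orientation F ori"
    and "circuit_partition F P"
    and "E \<subseteq> edges F"
    and "\<forall>C\<in>P. \<forall>w. circuit_walk F w \<and> trans_set w = C \<longrightarrow> card (walk_edges w \<inter> E) \<le> 1"
    and "cycle_spanning_set (del_edges F E) tail \<Gamma>"
  shows "represents_cographic \<Gamma>
           (\<lambda>W t. \<Sum>e\<in>edges F. CM tail W e * Delta tail ori e t)
           (touch_graph F P)"
proof -
  interpret thm9 F tail ori P E \<Gamma>
    by (rule thm9.intro) (fact assms)+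
  show ?thesis unfolding represents_cographic_def
    using D1main D2main by blast
qed

end
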